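(* Let $m\in\mathbb{Z}_{>0}$ and $n\in\mathbb{Z}_{\ge0}$ have the same parity, and let $\psi:\mathcal{G}^{(m,n)}\to\mathbb{C}$ be a Whittaker function. Then the Whittaker module $W_{\psi}=\mathrm{Ind}_{\mathcal{G}^{(m,n)}}^{\mathcal{G}}\mathbb{C}w_\psi=\mathcal{U}(\mathcal{G})\otimes_{\mathcal{U}(\mathcal{G}^{(m,n)})}\mathbb{C}w_\psi$ is an irreducible $\mathcal{G}$-module if and only if $\psi(I_{m+n-1})\,\psi(J_{m+n-1})\ne0$.
   Context: $\mathcal{G}$ is the complex Lie algebra with basis $\{L_n,H_n,I_n,J_n,\mathbf{c}_1,\mathbf{c}_2,\mathbf{c}_3: n\in\mathbb{Z}\}$ whose brackets of basis elements are $[L_m,L_n]=(n-m)L_{m+n}+\frac{m^3-m}{12}\delta_{m+n,0}\mathbf{c}_1$, $[L_m,H_n]=nH_{m+n}+m^2\delta_{m+n,0}\mathbf{c}_2$, $[H_m,H_n]=m\delta_{m+n,0}\mathbf{c}_3$, $[L_m,I_n]=(n-m)I_{m+n}$, $[L_m,J_n]=(n-m)J_{m+n}$, $[H_m,I_n]=I_{m+n}$, $[H_m,J_n]=-J_{m+n}$ (and antisymmetric counterparts), all other brackets of basis elements zero (this is the universal central extension of the planar Galilean conformal algebra). For $m,n\ge0$, $\mathcal{G}^{(m,n)}=\sum_{i\ge0}(\mathbb{C}L_{m+i}+\mathbb{C}H_{m+i}+\mathbb{C}I_{n+i}+\mathbb{C}J_{n+i})+\sum_{k=1}^3\mathbb{C}\mathbf{c}_k$.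 A Whittaker function is a Lie algebra homomorphism $\psi:\mathcal{G}^{(m,n)}\to\mathbb{C}$, and $\mathbb{C}w_\psi$ is the one-dimensional $\mathcal{G}^{(m,n)}$-module with $xw_\psi=\psi(x)w_\psi$. *)

theory Defs
  imports Complex_Main
begin

section \<open>The Lie algebra G (universal central extension of the planar Galilean conformal algebra)\<close>

datatype gb = L int | H int | I int | J int | C1 | C2 | C3

text \<open>Elements of G are represented as coefficient functions gb => complex (finitely supported).
  The bracket of two basis elements, as an element of G.\<close>
fun br :: "gb \<Rightarrow> gb \<Rightarrow> gb \<Rightarrow> complex" where
  "br (L a) (L b) = (\<lambda>x. (if x = L (a + b) then of_int (b - a) else 0)
        + (if x = C1 \<and> a + b = 0 then of_int (a^3 - a) / 12 else 0))"
| "br (L a) (H b) = (\<lambda>x. (if x = H (a + b) then of_int b else 0)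
        + (if x = C2 \<and> a + b = 0 then of_int (a^2) else 0))"
| "br (H a) (L b) = (\<lambda>x. (if x = H (a + b) then - of_int a else 0)
        + (if x = C2 \<and> a + b = 0 then - of_int (b^2) else 0))"
| "br (H a) (H b) = (\<lambda>x. if x = C3 \<and> a + b = 0 then of_int a else 0)"
| "br (L a) (I b) = (\<lambda>x. if x = I (a + b) then of_int (b - a) else 0)"
| "br (I b) (L a) = (\<lambda>x. if x = I (a + b) then of_int (a - b) else 0)"
| "br (L a) (J b) = (\<lambda>x. if x = J (a + b) then of_int (b - a) else 0)"
| "br (J b) (L a) = (\<lambda>x. if x = J (a + b) then of_int (a - b) else 0)"
| "br (H a) (I b) = (\<lambda>x. if x = I (a + b) then 1 else 0)"
| "br (I b) (H a) = (\<lambda>x. if x = I (a + b) then -1 else 0)"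
| "br (H a) (J b) = (\<lambda>x. if x = J (a + b) then -1 else 0)"
| "br (J b) (H a) = (\<lambda>x. if x = J (a + b) then 1 else 0)"
| "br _ _ = (\<lambda>x. 0)"

definition Gsub_basis :: "nat \<Rightarrow> nat \<Rightarrow> gb set" where
  "Gsub_basis m n = {L k | k. k \<ge> int m} \<union> {H k | k. k \<ge> int m}
     \<union> {I k | k. k \<ge> int n} \<union> {J k | k. k \<ge> int n} \<union> {C1, C2, C3}"

text \<open>A Whittaker function psi is determined by its values on the basis of G^(m,n)
  (extended linearly); its values on other basis symbols are irrelevant.  It is a Lie
  algebra homomorphism into the abelian Lie algebra C iff it kills all brackets of basis
  elements of G^(m,n).\<close>
definition whittaker_fun :: "nat \<Rightarrow> nat \<Rightarrow> (gb \<Rightarrow> complex) \<Rightarrow> bool" where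
  "whittaker_fun m n \<psi> \<longleftrightarrow>
     (\<forall>x\<in>Gsub_basis m n. \<forall>y\<in>Gsub_basis m n.
        (\<Sum>z\<in>{z. br x y z \<noteq> 0}. br x y z * \<psi> z) = 0)"

text \<open>Elements of the tensor algebra: coefficient functions on words of basis symbols
  (we only use finitely supported ones).\<close>
type_synonym tens = "gb list \<Rightarrow> complex"

definition Tfin :: "tens set" where
  "Tfin = {f. finite {w. f w \<noteq> 0}}"

definition mono :: "gb list \<Rightarrow> tens" where
  "mono u = (\<lambda>w. if w = u then 1 else 0)"

definition deg1 :: "(gb \<Rightarrow> complex) \<Rightarrow> tens" where
  "deg1 g = (\<lambda>w. case w of [b] \<Rightarrow> g b | _ \<Rightarrow> 0)"

definition tmul :: "tens \<Rightarrow> tens \<Rightarrow> tens" where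
  "tmul f g = (\<lambda>w. \<Sum>k\<le>length w. f (take k w) * g (drop k w))"

definition subsp :: "tens set \<Rightarrow> bool" where
  "subsp S \<longleftrightarrow> (\<lambda>w. 0) \<in> S \<and> (\<forall>f\<in>S. \<forall>g\<in>S. (\<lambda>w. f w + g w) \<in> S)
      \<and> (\<forall>c. \<forall>f\<in>S. (\<lambda>w. c * f w) \<in> S)"

definition lspan :: "tens set \<Rightarrow> tens set" where
  "lspan A = \<Inter>{S. subsp S \<and> A \<subseteq> S}"

text \<open>Relation x y - y x - [x,y] defining U(G) as a quotient of T(G).\<close>
definition rel :: "gb \<Rightarrow> gb \<Rightarrow> tens" where
  "rel x y = (\<lambda>w. mono [x, y] w - mono [y, x] w - deg1 (br x y) w)"

text \<open>Kernel N of the projection T(G) -> W_psi = U(G) \<otimes>_{U(G^(m,n))} C w_psi,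
  i.e. the two-sided ideal generated by the relations of U(G) plus the left ideal
  generated by the x - psi(x), x in G^(m,n).  Thus W_psi = Tfin / N, with w_psi the
  class of the empty word and G acting by left multiplication.\<close>
definition Wker :: "nat \<Rightarrow> nat \<Rightarrow> (gb \<Rightarrow> complex) \<Rightarrow> tens set" where
  "Wker m n \<psi> = lspan
     ({tmul (tmul (mono u) (rel x y)) (mono v) | u v x y. True}
      \<union> {tmul (mono u) (\<lambda>w. mono [x] w - \<psi> x * mono [] w) | u x. x \<in> Gsub_basis m n})"

text \<open>G-submodules of W_psi correspond to subspaces S with N <= S <= Tfin stable under
  left multiplication by (the images of) the basis elements of G.\<close>
definition whittaker_module_irreducible :: "nat \<Rightarrow> nat \<Rightarrow> (gb \<Rightarrow> complex) \<Rightarrow> bool" where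
  "whittaker_module_irreducible m n \<psi> \<longleftrightarrow>
     Wker m n \<psi> \<noteq> Tfin \<and>
     (\<forall>S. subsp S \<and> Wker m n \<psi> \<subseteq> S \<and> S \<subseteq> Tfin \<and>
          (\<forall>b. \<forall>f\<in>S. tmul (mono [b]) f \<in> S)
        \<longrightarrow> S = Wker m n \<psi> \<or> S = Tfin)"

end

theory Submission
  imports Defs "HOL-Library.Multiset"
begin


fun rk :: "gb \<Rightarrow> int" where
  "rk (L i) = 8*i" | "rk (H i) = 8*i+1" | "rk (I i) = 8*i+2" | "rk (J i) = 8*i+3"
| "rk C1 = 4" | "rk C2 = 5" | "rk C3 = 6"

lemma rk_inj: "rk x = rk y \<Longrightarrow> x = y"
  by (cases x; cases y; simp; presburger)

instantiation gb :: linorder begin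
definition "less_eq_gb x y = (rk x \<le> rk y)"
definition "less_gb x y = (rk x < rk y)"
instance by standard (auto simp: less_eq_gb_def less_gb_def intro: rk_inj)
end

definition gtB :: "gb set \<Rightarrow> gb \<Rightarrow> gb \<Rightarrow> bool" where
  "gtB B x y \<longleftrightarrow> (x \<in> B \<and> y \<notin> B) \<or> ((x \<in> B \<longleftrightarrow> y \<in> B) \<and> y < x)"

lemma gtB_asym: "gtB B x y \<Longrightarrow> \<not> gtB B y x"
  by (auto simp: gtB_def)
lemma gtB_irrefl: "\<not> gtB B x x"
  by (auto simp: gtB_def)
lemma gtB_trans: "gtB B x y \<Longrightarrow> gtB B y z \<Longrightarrow> gtB B x z"
  by (auto simp: gtB_def)
lemma gtB_total: "x \<noteq> y \<Longrightarrow> gtB B x y \<or> gtB B y x"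
  by (auto simp: gtB_def)

fun invs :: "gb set \<Rightarrow> gb list \<Rightarrow> nat" where
  "invs B [] = 0"
| "invs B (x # w) = length (filter (gtB B x) w) + invs B w"

lemma invs_swap: "gtB B a b \<Longrightarrow> invs B (u @ b # a # v) < invs B (u @ a # b # v)"
  by (induction u) (auto simp: gtB_asym)

fun fd :: "gb set \<Rightarrow> gb list \<Rightarrow> (gb list \<times> gb \<times> gb \<times> gb list) option" where
  "fd B (a # b # v) = (if gtB B a b then Some ([], a, b, v)
       else map_option (\<lambda>(u,c,d,v'). (a # u, c, d, v')) (fd B (b # v)))"
| "fd B _ = None"

lemma fd_Some: "fd B w = Some (u,a,b,v) \<Longrightarrow> w = u @ a # b # v \<and> gtB B a b"
  by (induction B w arbitrary: u rule: fd.induct) (auto split: if_splits)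

lemma fd_first: "fd B w = Some (u,p,q,r) \<Longrightarrow> w = u' @ c # d # v' \<Longrightarrow> gtB B c d
   \<Longrightarrow> length u \<le> length u'"
proof (induction B w arbitrary: u u' rule: fd.induct)
  case (1 B a b v)
  show ?case
  proof (cases "gtB B a b")
    case True
    have "fd B (a # b # v) = Some (u,p,q,r)" by (rule 1(2))
    with True have "u = []" by simp
    thus ?thesis by simp
  next
    case False
    then obtain u0 where u0: "fd B (b # v) = Some (u0, p, q, r)" "u = a # u0"
      using 1(2) by (auto split: prod.splits)
    show ?thesis
    proof (cases u')
      case Nil thus ?thesis using 1 False by auto
    next
      case (Cons x u1)
      then have "b # v = u1 @ c # d # v'" using 1 by auto
      from "1.IH"[OF False u0(1) this 1(4)] show ?thesis using u0 Cons by simp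
    qed
  qed
qed auto

lemma fd_None: "fd B w = None \<Longrightarrow> w = u @ c # d # r \<Longrightarrow> \<not> gtB B c d"
proof (induction B w arbitrary: u rule: fd.induct)
  case (1 B a b v)
  have f: "fd B (a # b # v) = None" by (rule 1(2))
  then have ng: "\<not> gtB B a b" and fn: "fd B (b # v) = None" by (auto split: if_splits)
  show ?case
  proof (cases u)
    case Nil thus ?thesis using 1(3) ng by auto
  next
    case (Cons x u1)
    then have "b # v = u1 @ c # d # r" using 1(3) by auto
    thus ?thesis using "1.IH"[OF ng fn] by blast
  qed
qed (auto simp: Cons_eq_append_conv)

definition bsupp :: "gb \<Rightarrow> gb \<Rightarrow> gb set" where
  "bsupp x y = {z. br x y z \<noteq> 0}"

function NF :: "gb set \<Rightarrow> (gb \<Rightarrow> complex) \<Rightarrow> gb list \<Rightarrow> tens" where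
  "NF B \<phi> w = (case fd B w of
      Some (u,a,b,v) \<Rightarrow> (\<lambda>t. NF B \<phi> (u @ b # a # v) t + (\<Sum>z\<in>bsupp a b. br a b z * NF B \<phi> (u @ z # v) t))
    | None \<Rightarrow> (if w \<noteq> [] \<and> last w \<in> B then (\<lambda>t. \<phi> (last w) * NF B \<phi> (butlast w) t) else mono w))"
  by pat_completeness auto
termination
  by (relation "measures [\<lambda>(B,\<phi>,w). length w, \<lambda>(B,\<phi>,w). invs B w]") (auto dest!: fd_Some simp: invs_swap)


fun idx :: "gb \<Rightarrow> int" where
  "idx (L i) = i" | "idx (H i) = i" | "idx (I i) = i" | "idx (J i) = i" | "idx _ = 0"

definition Sup7 :: "int \<Rightarrow> gb set" where
  "Sup7 s = {L s, H s, I s, J s, C1, C2, C3}"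

lemma bsupp_sub: "bsupp x y \<subseteq> Sup7 (idx x + idx y)"
  unfolding bsupp_def Sup7_def
  by (cases x; cases y) (auto split: if_splits)

lemma finite_bsupp[simp]: "finite (bsupp x y)"
  by (rule finite_subset[OF bsupp_sub]) (simp add: Sup7_def)

lemma sum_bsupp: "(\<Sum>z\<in>bsupp x y. br x y z * F z) = (\<Sum>z\<in>Sup7 (idx x + idx y). br x y z * F z)"
  using bsupp_sub[of x y] by (intro sum.mono_neutral_left) (auto simp: Sup7_def bsupp_def)

lemma sum_Sup7: "(\<Sum>z\<in>Sup7 s. G z) = G (L s) + G (H s) + G (I s) + G (J s) + G C1 + G C2 + G C3"
  by (simp add: Sup7_def add.assoc)

lemma lin3: "x + (y + z) = (0::int) \<Longrightarrow> z = - x - y" by simp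
lemma lin2: "x + y = (0::int) \<Longrightarrow> y = - x" by simp
lemma lin3a: "x + y = - (z::int) \<Longrightarrow> z = - x - y" by simp

lemma br_anti: "br y x z = - br x y z"
  by (cases x; cases y) (auto simp: field_simps power2_eq_square power3_eq_cube dest!: lin2)

lemma br_self: "br x x z = 0"
  by (cases x) auto

lemma bsupp_anti: "bsupp y x = bsupp x y"
  by (auto simp: bsupp_def br_anti[of y x])

lemma jacobi: "(\<Sum>z\<in>bsupp a b. br a b z * br z c t) + (\<Sum>z\<in>bsupp a c. br a c z * br b z t)
   + (\<Sum>z\<in>bsupp b c. br b c z * br z a t) = 0"
  unfolding sum_bsupp sum_Sup7
  by (cases a; cases b; cases c; cases t) (auto simp: field_simps power2_eq_square power3_eq_cube dest!: lin3 lin2 lin3a)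

lemma bsupp_central: "z \<in> {C1, C2, C3} \<Longrightarrow> bsupp z w = {} \<and> bsupp w z = {}"
  by (cases w) (auto simp: bsupp_def)

lemma bsupp_idx: "z \<in> bsupp x y \<Longrightarrow> z \<in> {C1, C2, C3} \<or> idx z = idx x + idx y"
  using bsupp_sub[of x y] by (auto simp: Sup7_def)

lemma bsupp_nested1: "z \<in> bsupp x y \<Longrightarrow> bsupp z w \<subseteq> Sup7 (idx x + idx y + idx w)"
  using bsupp_idx[of z x y] bsupp_central[of z w] bsupp_sub[of z w] by auto

lemma bsupp_nested2: "z \<in> bsupp x y \<Longrightarrow> bsupp w z \<subseteq> Sup7 (idx x + idx y + idx w)"
  using bsupp_idx[of z x y] bsupp_central[of z w] bsupp_sub[of w z] by (auto simp: add_ac)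

lemma finite_Sup7[simp]: "finite (Sup7 s)" by (simp add: Sup7_def)

lemma sum_bsupp_T: "bsupp x y \<subseteq> T \<Longrightarrow> finite T \<Longrightarrow>
   (\<Sum>s\<in>bsupp x y. br x y s * F s) = (\<Sum>s\<in>T. br x y s * F s)"
  by (intro sum.mono_neutral_left) (auto simp: bsupp_def)

lemma JAC: "(\<Sum>z\<in>bsupp a b. br a b z * (\<Sum>s\<in>bsupp z c. br z c s * F s))
  + (\<Sum>z\<in>bsupp a c. br a c z * (\<Sum>s\<in>bsupp b z. br b z s * F s))
  + (\<Sum>z\<in>bsupp b c. br b c z * (\<Sum>s\<in>bsupp z a. br z a s * F s)) = 0"
proof -
  define T where "T = Sup7 (idx a + idx b + idx c)"
  have 1: "(\<Sum>z\<in>bsupp a b. br a b z * (\<Sum>s\<in>bsupp z c. br z c s * F s))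
     = (\<Sum>z\<in>bsupp a b. br a b z * (\<Sum>s\<in>T. br z c s * F s))"
  proof (rule sum.cong[OF refl])
    fix z assume z: "z \<in> bsupp a b"
    have "bsupp z c \<subseteq> T" using bsupp_nested1[OF z, of c] by (simp add: T_def add_ac)
    thus "br a b z * (\<Sum>s\<in>bsupp z c. br z c s * F s) = br a b z * (\<Sum>s\<in>T. br z c s * F s)"
      by (simp add: sum_bsupp_T T_def)
  qed
  have 2: "(\<Sum>z\<in>bsupp a c. br a c z * (\<Sum>s\<in>bsupp b z. br b z s * F s))
     = (\<Sum>z\<in>bsupp a c. br a c z * (\<Sum>s\<in>T. br b z s * F s))"
  proof (rule sum.cong[OF refl])
    fix z assume z: "z \<in> bsupp a c"
    have "bsupp b z \<subseteq> T" using bsupp_nested2[OF z, of b] by (simp add: T_def add_ac)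
    thus "br a c z * (\<Sum>s\<in>bsupp b z. br b z s * F s) = br a c z * (\<Sum>s\<in>T. br b z s * F s)"
      by (simp add: sum_bsupp_T T_def)
  qed
  have 3: "(\<Sum>z\<in>bsupp b c. br b c z * (\<Sum>s\<in>bsupp z a. br z a s * F s))
     = (\<Sum>z\<in>bsupp b c. br b c z * (\<Sum>s\<in>T. br z a s * F s))"
  proof (rule sum.cong[OF refl])
    fix z assume z: "z \<in> bsupp b c"
    have "bsupp z a \<subseteq> T" using bsupp_nested1[OF z, of a] by (simp add: T_def add_ac)
    thus "br b c z * (\<Sum>s\<in>bsupp z a. br z a s * F s) = br b c z * (\<Sum>s\<in>T. br z a s * F s)"
      by (simp add: sum_bsupp_T T_def)
  qed
  have "(\<Sum>z\<in>bsupp a b. br a b z * (\<Sum>s\<in>T. br z c s * F s))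
     + (\<Sum>z\<in>bsupp a c. br a c z * (\<Sum>s\<in>T. br b z s * F s))
     + (\<Sum>z\<in>bsupp b c. br b c z * (\<Sum>s\<in>T. br z a s * F s))
     = (\<Sum>s\<in>T. F s * ((\<Sum>z\<in>bsupp a b. br a b z * br z c s) + (\<Sum>z\<in>bsupp a c. br a c z * br b z s)
        + (\<Sum>z\<in>bsupp b c. br b c z * br z a s)))"
    by (simp add: sum_distrib_left sum_distrib_right sum.distrib algebra_simps sum.swap[of _ T])
  also have "\<dots> = 0" by (simp add: jacobi)
  finally show ?thesis using 1 2 3 by simp
qed


declare NF.simps[simp del]

lemma NF_Some: "fd B w = Some (u,a,b,v) \<Longrightarrow>
  NF B \<phi> w t = NF B \<phi> (u @ b # a # v) t + (\<Sum>z\<in>bsupp a b. br a b z * NF B \<phi> (u @ z # v) t)"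
  by (subst NF.simps) simp

lemma NF_None1: "fd B w = None \<Longrightarrow> w \<noteq> [] \<Longrightarrow> last w \<in> B \<Longrightarrow>
  NF B \<phi> w t = \<phi> (last w) * NF B \<phi> (butlast w) t"
  by (subst NF.simps) simp

lemma NF_None2: "fd B w = None \<Longrightarrow> \<not> (w \<noteq> [] \<and> last w \<in> B) \<Longrightarrow> NF B \<phi> w = mono w"
  by (subst NF.simps) auto


lemma sum_bsupp_anti: "(\<Sum>z\<in>bsupp b a. br b a z * F z) = - (\<Sum>z\<in>bsupp a b. br a b z * F z)"
  by (simp add: bsupp_anti br_anti[of b a] sum_negf)

lemma lin_comb: "(A::'a::ab_group_add) = P + S1 \<Longrightarrow> P = Q + S2 \<Longrightarrow> Q = R + S3 \<Longrightarrow> D = E + T2 \<Longrightarrow>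
  E = R + T1 \<Longrightarrow> S1 = T1 + X1 \<Longrightarrow> S2 = T2 + X2 \<Longrightarrow> S3 = T3 + X3 \<Longrightarrow> X1 + X2 + X3 = 0 \<Longrightarrow> A = D + T3"
  by (simp add: algebra_simps)

lemma app_eq_same_len: "xs @ ys = xs' @ ys' \<Longrightarrow> length xs = length xs' \<Longrightarrow> xs = xs' \<and> ys = ys'"
  by (simp add: append_eq_append_conv)

locale nfl =
  fixes B :: "gb set" and \<phi> :: "gb \<Rightarrow> complex"
  assumes clos: "x \<in> B \<Longrightarrow> y \<in> B \<Longrightarrow> br x y z \<noteq> 0 \<Longrightarrow> z \<in> B"
    and chr: "x \<in> B \<Longrightarrow> y \<in> B \<Longrightarrow> (\<Sum>z\<in>bsupp x y. br x y z * \<phi> z) = 0"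
begin

abbreviation N where "N \<equiv> NF B \<phi>"

definition R1 where "R1 w \<longleftrightarrow> (\<forall>u a b v t. w = u @ a # b # v \<longrightarrow> gtB B a b \<longrightarrow>
     N w t = N (u @ b # a # v) t + (\<Sum>z\<in>bsupp a b. br a b z * N (u @ z # v) t))"
definition R2 where "R2 w \<longleftrightarrow> (\<forall>t. w \<noteq> [] \<longrightarrow> last w \<in> B \<longrightarrow> N w t = \<phi> (last w) * N (butlast w) t)"

lemma R1D: assumes "R1 (u @ a # b # v)" "gtB B a b"
  shows "N (u @ a # b # v) t = N (u @ b # a # v) t + (\<Sum>z\<in>bsupp a b. br a b z * N (u @ z # v) t)"
  using assms(1) unfolding R1_def
  apply -
  apply (drule spec[of _ u], drule spec[of _ a], drule spec[of _ b], drule spec[of _ v], drule spec[of _ t])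
  using assms(2) by simp

lemma R2D: assumes "R2 (u @ [y])" "y \<in> B"
  shows "N (u @ [y]) t = \<phi> y * N u t"
  using assms unfolding R2_def by simp

lemma main: "R1 w \<and> R2 w"
proof (induction w rule: wf_induct[OF wf_measures[of "[length, invs B]"]])
  case (1 w)
  have IHs: "length y < length w \<Longrightarrow> R1 y \<and> R2 y" for y using 1 by simp
  have IHi: "length y = length w \<Longrightarrow> invs B y < invs B w \<Longrightarrow> R1 y \<and> R2 y" for y using 1 by simp
  have GR1: "N (u @ a # b # v) t = N (u @ b # a # v) t + (\<Sum>z\<in>bsupp a b. br a b z * N (u @ z # v) t)"
    if "length (u @ a # b # v) < length w" for u a b v t
  proof (cases "a = b")
    case True
    have "bsupp a a = {}" by (simp add: bsupp_def br_self)
    thus ?thesis using True by simp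
  next
    case False
    then consider "gtB B a b" | "gtB B b a" using gtB_total by blast
    thus ?thesis
    proof cases
      case 1 show ?thesis by (rule R1D[OF conjunct1[OF IHs[OF that]] 1])
    next
      case 2
      have "R1 (u @ b # a # v)" using IHs[of "u @ b # a # v"] that by simp
      hence "N (u @ b # a # v) t = N (u @ a # b # v) t + (\<Sum>z\<in>bsupp b a. br b a z * N (u @ z # v) t)"
        using 2 by (rule R1D)
      thus ?thesis unfolding sum_bsupp_anti[of b a] by simp
    qed
  qed
  have IHi1: "N (u @ a # b # v) t = N (u @ b # a # v) t + (\<Sum>z\<in>bsupp a b. br a b z * N (u @ z # v) t)"
    if "length (u @ a # b # v) = length w" "invs B (u @ a # b # v) < invs B w" "gtB B a b" for u a b v t
    by (rule R1D[OF conjunct1[OF IHi[OF that(1,2)]] that(3)])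
  have IHi2: "N (u @ [y]) t = \<phi> y * N u t"
    if "length (u @ [y]) = length w" "invs B (u @ [y]) < invs B w" "y \<in> B" for u y t
    by (rule R2D[OF conjunct2[OF IHi[OF that(1,2)]] that(3)])
  have IHs2: "N (u @ [y]) t = \<phi> y * N u t"
    if "length (u @ [y]) < length w" "y \<in> B" for u y t
    by (rule R2D[OF conjunct2[OF IHs[OF that(1)]] that(2)])
  have r1: "R1 w"
    unfolding R1_def
  proof (intro allI impI)
    fix u' c d v' t
    assume w: "w = u' @ c # d # v'" and cd: "gtB B c d"
    show "N w t = N (u' @ d # c # v') t + (\<Sum>z\<in>bsupp c d. br c d z * N (u' @ z # v') t)"
    proof (cases "fd B w")
      case None thus ?thesis using fd_None[OF None w] cd by simp
    next
      case (Some x)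
      then obtain u a b v where f: "fd B w = Some (u,a,b,v)" by (cases x) auto
      from fd_Some[OF f] have w2: "w = u @ a # b # v" and ab: "gtB B a b" by auto
      have le: "length u \<le> length u'" using fd_first[OF f w cd] .
      have Nw: "N w tt = N (u @ b # a # v) tt + (\<Sum>z\<in>bsupp a b. br a b z * N (u @ z # v) tt)" for tt
        using NF_Some[OF f] .
      have weq: "u @ a # b # v = u' @ c # d # v'" using w w2 by simp
      consider "length u' = length u" | "length u' = Suc (length u)" | "Suc (Suc (length u)) \<le> length u'"
        using le by linarith
      then show ?thesis
      proof cases
        case 1
        then have "u' = u \<and> c = a \<and> d = b \<and> v' = v" using weq by (auto simp: append_eq_append_conv)
        thus ?thesis using Nw by simp
      next
        case 2
        have "(u @ [a]) @ b # v = u' @ c # d # v'" using weq by simp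
        from app_eq_same_len[OF this] 2
        have "u' = u @ [a] \<and> c = b \<and> v = d # v'" by auto
        then have u': "u' = u @ [a]" and cb: "c = b" and v: "v = d # v'" by auto
        define r where "r = v'"
        define e where "e = d"
        have bc: "gtB B b e" using cd cb e_def by simp
        have ac: "gtB B a e" using gtB_trans[OF ab bc] .
        have w3: "w = u @ a # b # e # r" using w2 v r_def e_def by simp
        have lw: "length w = length u + length r + 3" using w3 by simp
        have iw: "invs B (u @ b # a # e # r) < invs B w" using invs_swap[OF ab, of u "e # r"] w3 by simp
        have e1: "N (u @ b # a # e # r) t = N (u @ b # e # a # r) t + (\<Sum>z\<in>bsupp a e. br a e z * N (u @ b # z # r) t)"
          using IHi1[of "u @ [b]" a e r t] ac lw iw by simp
        have iw2: "invs B (u @ b # e # a # r) < invs B w"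
          using invs_swap[OF ac, of "u @ [b]" r] iw by simp
        have e2: "N (u @ b # e # a # r) t = N (u @ e # b # a # r) t + (\<Sum>z\<in>bsupp b e. br b e z * N (u @ z # a # r) t)"
          using IHi1[of u b e "a # r" t] bc lw iw2 by simp
        have iw3: "invs B (u @ a # e # b # r) < invs B w"
          using invs_swap[OF bc, of "u @ [a]" r] w3 by simp
        have e3: "N (u @ a # e # b # r) t = N (u @ e # a # b # r) t + (\<Sum>z\<in>bsupp a e. br a e z * N (u @ z # b # r) t)"
          using IHi1[of u a e "b # r" t] ac lw iw3 by simp
        have iw4: "invs B (u @ e # a # b # r) < invs B w"
          using invs_swap[OF ac, of u "b # r"] iw3 by simp
        have e4: "N (u @ e # a # b # r) t = N (u @ e # b # a # r) t + (\<Sum>z\<in>bsupp a b. br a b z * N (u @ e # z # r) t)"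
          using IHi1[of "u @ [e]" a b r t] ab lw iw4 by simp
        have h1: "(\<Sum>z\<in>bsupp a b. br a b z * N (u @ z # e # r) t) = (\<Sum>z\<in>bsupp a b. br a b z * N (u @ e # z # r) t)
            + (\<Sum>z\<in>bsupp a b. br a b z * (\<Sum>s\<in>bsupp z e. br z e s * N (u @ s # r) t))"
          using GR1[of u _ e r t] lw by (simp add: sum.distrib distrib_left)
        have h2: "(\<Sum>z\<in>bsupp a e. br a e z * N (u @ b # z # r) t) = (\<Sum>z\<in>bsupp a e. br a e z * N (u @ z # b # r) t)
            + (\<Sum>z\<in>bsupp a e. br a e z * (\<Sum>s\<in>bsupp b z. br b z s * N (u @ s # r) t))"
          using GR1[of u b _ r t] lw by (simp add: sum.distrib distrib_left)
        have h3: "(\<Sum>z\<in>bsupp b e. br b e z * N (u @ z # a # r) t) = (\<Sum>z\<in>bsupp b e. br b e z * N (u @ a # z # r) t)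
            + (\<Sum>z\<in>bsupp b e. br b e z * (\<Sum>s\<in>bsupp z a. br z a s * N (u @ s # r) t))"
          using GR1[of u _ a r t] lw by (simp add: sum.distrib distrib_left)
        have J: "(\<Sum>z\<in>bsupp a b. br a b z * (\<Sum>s\<in>bsupp z e. br z e s * N (u @ s # r) t))
          + (\<Sum>z\<in>bsupp a e. br a e z * (\<Sum>s\<in>bsupp b z. br b z s * N (u @ s # r) t))
          + (\<Sum>z\<in>bsupp b e. br b e z * (\<Sum>s\<in>bsupp z a. br z a s * N (u @ s # r) t)) = 0"
          by (rule JAC)
        have Nw': "N w t = N (u @ b # a # e # r) t + (\<Sum>z\<in>bsupp a b. br a b z * N (u @ z # e # r) t)"
          using Nw[of t, unfolded v] unfolding r_def e_def .
        have "N w t = N (u @ a # e # b # r) t + (\<Sum>z\<in>bsupp b e. br b e z * N (u @ a # z # r) t)"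
          by (rule lin_comb[OF Nw' e1 e2 e3 e4 h1 h2 h3 J])
        thus ?thesis using u' cb r_def e_def by simp
      next
        case 3
        obtain m where u': "u' = u @ a # b # m" and v: "v = m @ c # d # v'"
        proof -
          from weq obtain us where "u' = u @ us \<and> us @ c # d # v' = a # b # v"
            using 3 by (auto simp: append_eq_append_conv2 dest: arg_cong[where f=length])
          moreover then have "length us \<ge> 2" using 3 by simp
          ultimately show ?thesis using that
            by (cases us; cases "tl us") auto
        qed
        define r where "r = v'"
        have w3: "w = u @ a # b # m @ c # d # r" using w2 v r_def by simp
        have lw: "length w = length u + length m + length r + 4" using w3 by simp
        have f1: "N (u @ b # a # m @ c # d # r) t = N (u @ b # a # m @ d # c # r) t
            + (\<Sum>y\<in>bsupp c d. br c d y * N (u @ b # a # m @ y # r) t)"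
          using IHi1[of "u @ b # a # m" c d r t] cd lw invs_swap[OF ab, of u "m @ c # d # r"] w3 by simp
        have f2: "N (u @ z # m @ c # d # r) t = N (u @ z # m @ d # c # r) t
            + (\<Sum>y\<in>bsupp c d. br c d y * N (u @ z # m @ y # r) t)" for z
          using GR1[of "u @ z # m" c d r t] lw by simp
        have f3: "N (u @ a # b # m @ d # c # r) t = N (u @ b # a # m @ d # c # r) t
            + (\<Sum>z\<in>bsupp a b. br a b z * N (u @ z # m @ d # c # r) t)"
          using IHi1[of u a b "m @ d # c # r" t] ab lw invs_swap[OF cd, of "u @ a # b # m" r] w3 by simp
        have f4: "N (u @ a # b # m @ y # r) t = N (u @ b # a # m @ y # r) t
            + (\<Sum>z\<in>bsupp a b. br a b z * N (u @ z # m @ y # r) t)" for y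
          using GR1[of u a b "m @ y # r" t] lw by simp
        have sw: "(\<Sum>z\<in>bsupp a b. br a b z * (\<Sum>y\<in>bsupp c d. br c d y * N (u @ z # m @ y # r) t))
           = (\<Sum>y\<in>bsupp c d. br c d y * (\<Sum>z\<in>bsupp a b. br a b z * N (u @ z # m @ y # r) t))"
          by (simp add: sum_distrib_left algebra_simps sum.swap[of _ "bsupp a b"])
        have Nw': "N w t = N (u @ b # a # m @ c # d # r) t + (\<Sum>z\<in>bsupp a b. br a b z * N (u @ z # m @ c # d # r) t)"
          using Nw[of t, unfolded v] unfolding r_def by simp
        have "N w t = N (u @ a # b # m @ d # c # r) t + (\<Sum>y\<in>bsupp c d. br c d y * N (u @ a # b # m @ y # r) t)"
          unfolding Nw' f1 f2 f3 f4 sum.distrib distrib_left sw by (simp add: add_ac)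
        thus ?thesis using u' r_def by simp
      qed
    qed
  qed
  have r2: "R2 w"
    unfolding R2_def
  proof (intro allI impI)
    fix t assume ne: "w \<noteq> []" and lB: "last w \<in> B"
    obtain w0 y where wy: "w = w0 @ [y]" using ne by (cases w rule: rev_cases) auto
    hence yB: "y \<in> B" using lB by simp
    show "N w t = \<phi> (last w) * N (butlast w) t"
    proof (cases "fd B w")
      case None thus ?thesis using NF_None1[OF None ne lB] by simp
    next
      case (Some x)
      then obtain u a b v where f: "fd B w = Some (u,a,b,v)" by (cases x) auto
      from fd_Some[OF f] have w2: "w = u @ a # b # v" and ab: "gtB B a b" by auto
      have Nw: "N w tt = N (u @ b # a # v) tt + (\<Sum>z\<in>bsupp a b. br a b z * N (u @ z # v) tt)" for tt
        using NF_Some[OF f] .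
      show ?thesis
      proof (cases "v = []")
        case True
        then have w3: "w = u @ [a, b]" and yb: "y = b" and w0: "w0 = u @ [a]" using w2 wy by auto
        have bB: "b \<in> B" using yB yb by simp
        have aB: "a \<in> B" using ab bB by (auto simp: gtB_def)
        have lw: "length w = length u + 2" using w3 by simp
        have p1: "N (u @ [b, a]) t = \<phi> a * N (u @ [b]) t"
          using IHi2[of "u @ [b]" a t] aB lw invs_swap[OF ab, of u "[]"] w3 by simp
        have p2: "N (u @ [b]) t = \<phi> b * N u t" using IHs2[of u b t] bB lw by simp
        have p2': "N (u @ [a]) t = \<phi> a * N u t" using IHs2[of u a t] aB lw by simp
        have p3: "N (u @ [z]) t = \<phi> z * N u t" if "z \<in> bsupp a b" for z
          using IHs2[of u z t] clos[OF aB bB, of z] that lw by (simp add: bsupp_def)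
        have "(\<Sum>z\<in>bsupp a b. br a b z * N (u @ [z]) t) = (\<Sum>z\<in>bsupp a b. br a b z * \<phi> z) * N u t"
          by (simp add: p3 sum_distrib_right mult.assoc)
        also have "\<dots> = 0" using chr[OF aB bB] by simp
        finally have p4: "(\<Sum>z\<in>bsupp a b. br a b z * N (u @ [z]) t) = 0" .
        show ?thesis using Nw[of t] p1 p2 p2' p4 w3 True by (simp add: butlast_append)
      next
        case False
        then obtain v0 y' where v: "v = v0 @ [y']" by (cases v rule: rev_cases) auto
        then have yy: "y' = y" and w0: "w0 = u @ a # b # v0" using w2 wy by auto
        have lw: "length w = length u + length v0 + 3" using w2 v by simp
        have q1: "N (u @ b # a # v0 @ [y]) t = \<phi> y * N (u @ b # a # v0) t"
          using IHi2[of "u @ b # a # v0" y t] yB lw invs_swap[OF ab, of u v] w2 v yy by simp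
        have q2: "N (u @ z # v0 @ [y]) t = \<phi> y * N (u @ z # v0) t" for z
          using IHs2[of "u @ z # v0" y t] yB lw by simp
        have q3: "N (u @ a # b # v0) t = N (u @ b # a # v0) t + (\<Sum>z\<in>bsupp a b. br a b z * N (u @ z # v0) t)"
          using GR1[of u a b v0 t] lw by simp
        have "N w t = \<phi> y * N (u @ b # a # v0) t + (\<Sum>z\<in>bsupp a b. br a b z * (\<phi> y * N (u @ z # v0) t))"
          using Nw[of t] q1 q2 w2 v yy by simp
        also have "\<dots> = \<phi> y * N (u @ a # b # v0) t"
          unfolding q3 by (simp add: sum_distrib_left distrib_left mult.left_commute)
        finally show ?thesis using w2 v yy by (simp add: butlast_append)
      qed
    qed
  qed
  show ?case using r1 r2 by simp
qed

end


lemma sum_single: "finite A \<Longrightarrow> a \<in> A \<Longrightarrow> (\<And>x. x \<in> A \<Longrightarrow> x \<noteq> a \<Longrightarrow> f x = 0) \<Longrightarrow> sum f A = f a"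
  by (subst sum.remove[of A a]) (auto intro: sum.neutral)

lemma subsp_zero: "subsp S \<Longrightarrow> (\<lambda>w. 0) \<in> S" by (simp add: subsp_def)
lemma subsp_add: "subsp S \<Longrightarrow> f \<in> S \<Longrightarrow> g \<in> S \<Longrightarrow> (\<lambda>w. f w + g w) \<in> S" by (simp add: subsp_def)
lemma subsp_scale: "subsp S \<Longrightarrow> f \<in> S \<Longrightarrow> (\<lambda>w. c * f w) \<in> S" by (simp add: subsp_def)
lemma subsp_diff: "subsp S \<Longrightarrow> f \<in> S \<Longrightarrow> g \<in> S \<Longrightarrow> (\<lambda>w. f w - g w) \<in> S"
proof -
  assume S: "subsp S" and f: "f \<in> S" and g: "g \<in> S"
  have "(\<lambda>w. (-1) * g w) \<in> S" using subsp_scale[OF S g] .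
  from subsp_add[OF S f this] show ?thesis by simp
qed
lemma subsp_sum: assumes S: "subsp S" shows "finite A \<Longrightarrow> (\<And>i. i \<in> A \<Longrightarrow> F i \<in> S) \<Longrightarrow> (\<lambda>w. \<Sum>i\<in>A. F i w) \<in> S"
proof (induction A rule: finite_induct)
  case empty thus ?case by (simp add: subsp_zero S)
next
  case (insert x A)
  have "(\<lambda>w. F x w + (\<Sum>i\<in>A. F i w)) \<in> S" using insert by (intro subsp_add[OF S]) auto
  thus ?case using insert by simp
qed
lemma subsp_sum_scale: "subsp S \<Longrightarrow> finite A \<Longrightarrow> (\<And>i. i \<in> A \<Longrightarrow> F i \<in> S) \<Longrightarrow> (\<lambda>w. \<Sum>i\<in>A. c i * F i w) \<in> S"
  using subsp_sum[of S A "\<lambda>i w. c i * F i w"] subsp_scale by blast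

lemma lspan_subsp: "subsp (lspan A)"
  unfolding lspan_def subsp_def by auto
lemma lspan_sup: "A \<subseteq> lspan A"
  unfolding lspan_def by auto
lemma lspan_min: "subsp S \<Longrightarrow> A \<subseteq> S \<Longrightarrow> lspan A \<subseteq> S"
  unfolding lspan_def by auto
lemma lspan_mono: "A \<subseteq> A' \<Longrightarrow> lspan A \<subseteq> lspan A'"
  using lspan_min[OF lspan_subsp, of A A'] lspan_sup[of A'] by blast

lemma Tfin_subsp: "subsp Tfin"
  unfolding subsp_def Tfin_def
proof (intro conjI ballI allI)
  fix f g :: tens assume f: "f \<in> {f. finite {w. f w \<noteq> 0}}" and g: "g \<in> {f. finite {w. f w \<noteq> 0}}"
  have "{w. f w + g w \<noteq> 0} \<subseteq> {w. f w \<noteq> 0} \<union> {w. g w \<noteq> 0}" by auto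
  thus "(\<lambda>w. f w + g w) \<in> {f. finite {w. f w \<noteq> 0}}" using f g by (auto intro: finite_subset)
next
  fix c and f :: tens assume f: "f \<in> {f. finite {w. f w \<noteq> 0}}"
  have "{w. c * f w \<noteq> 0} \<subseteq> {w. f w \<noteq> 0}" by auto
  thus "(\<lambda>w. c * f w) \<in> {f. finite {w. f w \<noteq> 0}}" using f by (auto intro: finite_subset)
qed simp

lemma mono_Tfin[simp]: "mono s \<in> Tfin"
proof -
  have "{w. mono s w \<noteq> 0} \<subseteq> {s}" by (auto simp: mono_def)
  thus ?thesis unfolding Tfin_def by (auto intro: finite_subset)
qed

lemma Tfin_expand: "f \<in> Tfin \<Longrightarrow> f = (\<lambda>w. \<Sum>s\<in>{s. f s \<noteq> 0}. f s * mono s w)"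
proof
  fix w assume f: "f \<in> Tfin"
  show "f w = (\<Sum>s\<in>{s. f s \<noteq> 0}. f s * mono s w)"
  proof (cases "f w = 0")
    case True
    have "(\<Sum>s\<in>{s. f s \<noteq> 0}. f s * mono s w) = 0" using True by (intro sum.neutral) (auto simp: mono_def)
    thus ?thesis using True by simp
  next
    case False
    have "(\<Sum>s\<in>{s. f s \<noteq> 0}. f s * mono s w) = f w * mono w w"
      using False f unfolding Tfin_def by (intro sum_single) (auto simp: mono_def)
    thus ?thesis by (simp add: mono_def)
  qed
qed

lemma mono_append_left: "mono (u @ s) w = (if take (length u) w = u then mono s (drop (length u) w) else 0)"
  unfolding mono_def
  by (auto simp: append_eq_conv_conj) (metis append_take_drop_id)

lemma tmul_mono_left: "tmul (mono u) f = (\<lambda>w. if take (length u) w = u then f (drop (length u) w) else 0)"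
proof
  fix w
  have "tmul (mono u) f w = (\<Sum>k\<le>length w. (if take k w = u then f (drop k w) else 0))"
    unfolding tmul_def mono_def by (intro sum.cong) auto
  also have "\<dots> = (if take (length u) w = u then f (drop (length u) w) else 0)"
  proof (cases "take (length u) w = u")
    case True
    have "length (take (length u) w) = length u" using True by simp
    hence le: "length u \<le> length w" by simp
    have "(\<Sum>k\<le>length w. (if take k w = u then f (drop k w) else 0)) = (if take (length u) w = u then f (drop (length u) w) else 0)"
      using le by (intro sum_single) (auto dest: arg_cong[where f=length])
    thus ?thesis using True by simp
  next
    case False
    have "(\<Sum>k\<le>length w. (if take k w = u then f (drop k w) else 0)) = 0"
    proof (intro sum.neutral ballI)
      fix k assume "k \<in> {..length w}"
      show "(if take k w = u then f (drop k w) else 0) = 0"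
        using False by (auto dest: arg_cong[where f=length] simp: min_def split: if_splits)
    qed
    thus ?thesis using False by simp
  qed
  finally show "tmul (mono u) f w = (if take (length u) w = u then f (drop (length u) w) else 0)" .
qed

lemma tmul_mono_right: "tmul f (mono v) = (\<lambda>w. if length v \<le> length w \<and> drop (length w - length v) w = v
     then f (take (length w - length v) w) else 0)"
proof
  fix w
  have "tmul f (mono v) w = (\<Sum>k\<le>length w. (if drop k w = v then f (take k w) else 0))"
    unfolding tmul_def mono_def by (intro sum.cong) auto
  also have "\<dots> = (if length v \<le> length w \<and> drop (length w - length v) w = v then f (take (length w - length v) w) else 0)"
  proof (cases "length v \<le> length w \<and> drop (length w - length v) w = v")
    case True
    show ?thesis using True by (subst sum_single[where a="length w - length v"]) (auto dest: arg_cong[where f=length])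
  next
    case False
    have "(\<Sum>k\<le>length w. (if drop k w = v then f (take k w) else 0)) = 0"
    proof (intro sum.neutral ballI)
      fix k assume "k \<in> {..length w}"
      hence kl: "k \<le> length w" by simp
      show "(if drop k w = v then f (take k w) else 0) = 0"
      proof (cases "drop k w = v")
        case True
        hence "length v = length w - k" by auto
        hence "length v \<le> length w \<and> drop (length w - length v) w = v" using kl True by simp
        thus ?thesis using False by simp
      qed simp
    qed
    thus ?thesis using False by (simp only: if_False)
  qed
  finally show "tmul f (mono v) w = (if length v \<le> length w \<and> drop (length w - length v) w = v then f (take (length w - length v) w) else 0)" .
qed

lemma mono_append_right: "mono (s @ v) w = (if length v \<le> length w \<and> drop (length w - length v) w = v
     then mono s (take (length w - length v) w) else 0)"
  unfolding mono_def
  apply (auto simp: )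
  apply (metis append_take_drop_id)
  done

lemma deg1_br: "deg1 (br x y) = (\<lambda>w. \<Sum>z\<in>bsupp x y. br x y z * mono [z] w)"
proof
  fix w
  show "deg1 (br x y) w = (\<Sum>z\<in>bsupp x y. br x y z * mono [z] w)"
  proof (cases "\<exists>b. w = [b]")
    case True
    then obtain b where w: "w = [b]" by blast
    show ?thesis
    proof (cases "b \<in> bsupp x y")
      case True thus ?thesis using w by (subst sum_single[where a=b]) (auto simp: deg1_def mono_def)
    next
      case False thus ?thesis using w by (subst sum.neutral) (auto simp: deg1_def mono_def bsupp_def)
    qed
  next
    case False
    hence "deg1 (br x y) w = 0" by (cases w rule: list.exhaust; cases "tl w") (auto simp: deg1_def)
    moreover have "(\<Sum>z\<in>bsupp x y. br x y z * mono [z] w) = 0" using False by (intro sum.neutral) (auto simp: mono_def)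
    ultimately show ?thesis by simp
  qed
qed

lemma mono_left0: "mono u w = (if take (length u) w = u then mono [] (drop (length u) w) else 0)"
  using mono_append_left[of u "[]" w] by simp

lemma gen_rel: "tmul (tmul (mono u) (rel x y)) (mono v) =
   (\<lambda>w. mono (u @ x # y # v) w - mono (u @ y # x # v) w - (\<Sum>z\<in>bsupp x y. br x y z * mono (u @ z # v) w))"
proof -
  have "tmul (mono u) (rel x y) = (\<lambda>w. mono (u @ [x, y]) w - mono (u @ [y, x]) w - (\<Sum>z\<in>bsupp x y. br x y z * mono (u @ [z]) w))"
    unfolding tmul_mono_left rel_def deg1_br mono_append_left[of u] by (auto simp: fun_eq_iff)
  show ?thesis
  proof
    fix w :: "gb list"
    define k where "k = length w - length v"
    define c where "c = (length v \<le> length w \<and> drop k w = v)"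
    have A: "mono (u @ x # y # v) w = (if c then mono (u @ [x, y]) (take k w) else 0)"
      using mono_append_right[of "u @ [x, y]" v w] by (simp add: c_def k_def)
    have B: "mono (u @ y # x # v) w = (if c then mono (u @ [y, x]) (take k w) else 0)"
      using mono_append_right[of "u @ [y, x]" v w] by (simp add: c_def k_def)
    have C: "mono (u @ z # v) w = (if c then mono (u @ [z]) (take k w) else 0)" for z
      using mono_append_right[of "u @ [z]" v w] by (simp add: c_def k_def)
    have T: "tmul (tmul (mono u) (rel x y)) (mono v) w = (if c then tmul (mono u) (rel x y) (take k w) else 0)"
        by (simp add: tmul_mono_right c_def k_def)
      show "tmul (tmul (mono u) (rel x y)) (mono v) w = mono (u @ x # y # v) w - mono (u @ y # x # v) w - (\<Sum>z\<in>bsupp x y. br x y z * mono (u @ z # v) w)"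
      unfolding T A B C
      by (cases c) (simp_all add: \<open>tmul (mono u) (rel x y) = _\<close>)
  qed
qed

lemma gen_chr: "tmul (mono u) (\<lambda>w. mono [x] w - c * mono [] w) = (\<lambda>w. mono (u @ [x]) w - c * mono u w)"
  unfolding tmul_mono_left using mono_left0[of u] mono_append_left[of u] by (auto simp: fun_eq_iff)

lemma tmul_mono_mono: "tmul (mono u) (mono s) = mono (u @ s)"
  unfolding tmul_mono_left using mono_append_left[of u] by (auto simp: fun_eq_iff)


definition gens :: "gb set \<Rightarrow> (gb \<Rightarrow> complex) \<Rightarrow> tens set" where
  "gens B \<phi> = {tmul (tmul (mono u) (rel x y)) (mono v) | u v x y. True}
      \<union> {tmul (mono u) (\<lambda>w. mono [x] w - \<phi> x * mono [] w) | u x. x \<in> B}"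

definition WkB :: "gb set \<Rightarrow> (gb \<Rightarrow> complex) \<Rightarrow> tens set" where
  "WkB B \<phi> = lspan (gens B \<phi>)"

lemma Wker_eq: "Wker m n \<psi> = WkB (Gsub_basis m n) \<psi>"
  by (simp add: Wker_def WkB_def gens_def)

lemma WkB_subsp: "subsp (WkB B \<phi>)" by (simp add: WkB_def lspan_subsp)

lemma gens_Tfin: "gens B \<phi> \<subseteq> Tfin"
proof
  fix g assume "g \<in> gens B \<phi>"
  then consider u v x y where "g = tmul (tmul (mono u) (rel x y)) (mono v)"
    | u x where "g = tmul (mono u) (\<lambda>w. mono [x] w - \<phi> x * mono [] w)" unfolding gens_def by blast
  thus "g \<in> Tfin"
  proof cases
    case 1
    have a: "(\<lambda>w. mono (u @ x # y # v) w - mono (u @ y # x # v) w) \<in> Tfin"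
      by (rule subsp_diff[OF Tfin_subsp mono_Tfin mono_Tfin])
    have b: "(\<lambda>w. \<Sum>z\<in>bsupp x y. br x y z * mono (u @ z # v) w) \<in> Tfin"
      by (rule subsp_sum_scale[OF Tfin_subsp finite_bsupp mono_Tfin])
    show ?thesis unfolding 1 gen_rel by (rule subsp_diff[OF Tfin_subsp a b])
  next
    case 2
    show ?thesis unfolding 2 gen_chr
      by (rule subsp_diff[OF Tfin_subsp mono_Tfin subsp_scale[OF Tfin_subsp mono_Tfin]])
  qed
qed

lemma WkB_Tfin: "WkB B \<phi> \<subseteq> Tfin"
  unfolding WkB_def by (rule lspan_min[OF Tfin_subsp gens_Tfin])

lemma gen_rel_in: "(\<lambda>w. mono (u @ x # y # v) w - mono (u @ y # x # v) w - (\<Sum>z\<in>bsupp x y. br x y z * mono (u @ z # v) w)) \<in> WkB B \<phi>"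
  using lspan_sup[of "gens B \<phi>"] unfolding WkB_def gens_def gen_rel[symmetric] by blast

lemma gen_chr_in: "x \<in> B \<Longrightarrow> (\<lambda>w. mono (u @ [x]) w - \<phi> x * mono u w) \<in> WkB B \<phi>"
  using lspan_sup[of "gens B \<phi>"] unfolding WkB_def gens_def gen_chr[symmetric] by blast

lemma tmul_mono1: "tmul (mono [b]) f = (\<lambda>w. case w of [] \<Rightarrow> 0 | c # w' \<Rightarrow> if c = b then f w' else 0)"
  unfolding tmul_mono_left by (auto simp: fun_eq_iff split: list.splits)

lemma tmul_mono1_add: "tmul (mono [b]) (\<lambda>w. f w + g w) = (\<lambda>w. tmul (mono [b]) f w + tmul (mono [b]) g w)"
  unfolding tmul_mono1 by (auto simp: fun_eq_iff split: list.splits)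
lemma tmul_mono1_scale: "tmul (mono [b]) (\<lambda>w. c * f w) = (\<lambda>w. c * tmul (mono [b]) f w)"
  unfolding tmul_mono1 by (auto simp: fun_eq_iff split: list.splits)
lemma tmul_mono1_zero: "tmul (mono [b]) (\<lambda>w. 0) = (\<lambda>w. 0)"
  unfolding tmul_mono1 by (auto simp: fun_eq_iff split: list.splits)

lemma tmul_mono1_closed:
  assumes S: "subsp S" and gs: "\<And>g. g \<in> A \<Longrightarrow> tmul (mono [b]) g \<in> S" and f: "f \<in> lspan A"
  shows "tmul (mono [b]) f \<in> S"
proof -
  have "subsp {f. tmul (mono [b]) f \<in> S}"
    unfolding subsp_def
    using S by (auto simp: tmul_mono1_add tmul_mono1_scale tmul_mono1_zero subsp_zero subsp_add subsp_scale)
  moreover have "A \<subseteq> {f. tmul (mono [b]) f \<in> S}" using gs by auto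
  ultimately show ?thesis using lspan_min f by blast
qed

lemma mono_Cons: "mono (b # s) (c # w) = (if c = b then mono s w else 0)" "mono (b # s) [] = 0"
  by (auto simp: mono_def)

lemma tmul_mono1_lin: "tmul (mono [b]) (\<lambda>w. mono s1 w - mono s2 w - (\<Sum>z\<in>A. c z * mono (s3 z) w))
   = (\<lambda>w. mono (b # s1) w - mono (b # s2) w - (\<Sum>z\<in>A. c z * mono (b # s3 z) w))"
proof
  fix w :: "gb list"
  show "tmul (mono [b]) (\<lambda>w. mono s1 w - mono s2 w - (\<Sum>z\<in>A. c z * mono (s3 z) w)) w
    = mono (b # s1) w - mono (b # s2) w - (\<Sum>z\<in>A. c z * mono (b # s3 z) w)"
  proof (cases w)
    case Nil thus ?thesis by (simp add: tmul_mono1 mono_Cons)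
  next
    case (Cons d w')
    thus ?thesis by (cases "d = b") (simp_all add: tmul_mono1 mono_Cons)
  qed
qed

lemma tmul_mono1_lin2: "tmul (mono [b]) (\<lambda>w. mono s1 w - k * mono s2 w)
   = (\<lambda>w. mono (b # s1) w - k * mono (b # s2) w)"
proof
  fix w :: "gb list"
  show "tmul (mono [b]) (\<lambda>w. mono s1 w - k * mono s2 w) w = mono (b # s1) w - k * mono (b # s2) w"
  proof (cases w)
    case Nil thus ?thesis by (simp add: tmul_mono1 mono_Cons)
  next
    case (Cons d w')
    thus ?thesis by (cases "d = b") (simp_all add: tmul_mono1 mono_Cons)
  qed
qed

lemma WkB_left: "f \<in> WkB B \<phi> \<Longrightarrow> tmul (mono [b]) f \<in> WkB B \<phi>"
proof -
  assume f: "f \<in> WkB B \<phi>"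
  have "tmul (mono [b]) g \<in> WkB B \<phi>" if "g \<in> gens B \<phi>" for g
  proof -
    from that consider u v x y where "g = tmul (tmul (mono u) (rel x y)) (mono v)"
      | u x where "x \<in> B" "g = tmul (mono u) (\<lambda>w. mono [x] w - \<phi> x * mono [] w)" unfolding gens_def by blast
    thus ?thesis
    proof cases
      case 1
      have "tmul (mono [b]) g = (\<lambda>w. mono ((b # u) @ x # y # v) w - mono ((b # u) @ y # x # v) w
          - (\<Sum>z\<in>bsupp x y. br x y z * mono ((b # u) @ z # v) w))"
        unfolding 1 gen_rel tmul_mono1_lin by simp
      thus ?thesis using gen_rel_in[of "b # u" x y v B \<phi>] by simp
    next
      case 2
      have "tmul (mono [b]) g = (\<lambda>w. mono ((b # u) @ [x]) w - \<phi> x * mono (b # u) w)"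
        unfolding 2 gen_chr tmul_mono1_lin2 by simp
      thus ?thesis using gen_chr_in[OF 2(1), of "b # u" \<phi>] by simp
    qed
  qed
  thus ?thesis using tmul_mono1_closed[OF WkB_subsp, of "gens B \<phi>"] f unfolding WkB_def by blast
qed

definition NFT :: "gb set \<Rightarrow> (gb \<Rightarrow> complex) \<Rightarrow> tens \<Rightarrow> tens" where
  "NFT B \<phi> f = (\<lambda>t. \<Sum>w\<in>{w. f w \<noteq> 0}. f w * NF B \<phi> w t)"

lemma NFT_superset: "f \<in> Tfin \<Longrightarrow> finite F \<Longrightarrow> {w. f w \<noteq> 0} \<subseteq> F \<Longrightarrow>
  NFT B \<phi> f = (\<lambda>t. \<Sum>w\<in>F. f w * NF B \<phi> w t)"
  unfolding NFT_def by (intro ext sum.mono_neutral_left) auto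

lemma Tfin_fin: "f \<in> Tfin \<Longrightarrow> finite {w. f w \<noteq> 0}" by (simp add: Tfin_def)

lemma NFT_add: "f \<in> Tfin \<Longrightarrow> g \<in> Tfin \<Longrightarrow> NFT B \<phi> (\<lambda>w. f w + g w) = (\<lambda>t. NFT B \<phi> f t + NFT B \<phi> g t)"
proof -
  assume f: "f \<in> Tfin" and g: "g \<in> Tfin"
  define F where "F = {w. f w \<noteq> 0} \<union> {w. g w \<noteq> 0}"
  have F: "finite F" using f g by (simp add: F_def Tfin_fin)
  have fg: "(\<lambda>w. f w + g w) \<in> Tfin" using subsp_add[OF Tfin_subsp f g] .
  have s1: "{w. f w \<noteq> 0} \<subseteq> F" and s2: "{w. g w \<noteq> 0} \<subseteq> F" and s3: "{w. f w + g w \<noteq> 0} \<subseteq> F"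
    by (auto simp: F_def)
  show ?thesis
    unfolding NFT_superset[OF f F s1] NFT_superset[OF g F s2] NFT_superset[OF fg F s3]
    by (auto simp: distrib_right sum.distrib)
qed

lemma NFT_scale: "f \<in> Tfin \<Longrightarrow> NFT B \<phi> (\<lambda>w. c * f w) = (\<lambda>t. c * NFT B \<phi> f t)"
proof -
  assume f: "f \<in> Tfin"
  define F where "F = {w. f w \<noteq> 0}"
  have F: "finite F" using f by (simp add: F_def Tfin_fin)
  have cf: "(\<lambda>w. c * f w) \<in> Tfin" using subsp_scale[OF Tfin_subsp f] .
  have s1: "{w. f w \<noteq> 0} \<subseteq> F" and s3: "{w. c * f w \<noteq> 0} \<subseteq> F"
    by (auto simp: F_def)
  show ?thesis
    unfolding NFT_superset[OF f F s1] NFT_superset[OF cf F s3]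
    by (auto simp: sum_distrib_left mult.assoc)
qed

lemma NFT_diff: "f \<in> Tfin \<Longrightarrow> g \<in> Tfin \<Longrightarrow> NFT B \<phi> (\<lambda>w. f w - g w) = (\<lambda>t. NFT B \<phi> f t - NFT B \<phi> g t)"
proof -
  assume f: "f \<in> Tfin" and g: "g \<in> Tfin"
  have g': "(\<lambda>w. (-1) * g w) \<in> Tfin" using subsp_scale[OF Tfin_subsp g] .
  have "NFT B \<phi> (\<lambda>w. f w + (-1) * g w) = (\<lambda>t. NFT B \<phi> f t + NFT B \<phi> (\<lambda>w. (-1) * g w) t)"
    by (rule NFT_add[OF f g'])
  thus ?thesis using NFT_scale[OF g, of B \<phi> "-1"] by simp
qed

lemma NFT_zero: "NFT B \<phi> (\<lambda>w. 0) = (\<lambda>t. 0)" by (simp add: NFT_def)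

lemma NFT_sum: "finite A \<Longrightarrow> (\<And>i. i \<in> A \<Longrightarrow> F i \<in> Tfin) \<Longrightarrow>
  NFT B \<phi> (\<lambda>w. \<Sum>i\<in>A. F i w) = (\<lambda>t. \<Sum>i\<in>A. NFT B \<phi> (F i) t)"
proof (induction A rule: finite_induct)
  case empty thus ?case by (simp add: NFT_zero)
next
  case (insert x A)
  have fA: "\<And>i. i \<in> A \<Longrightarrow> F i \<in> Tfin" using insert(4) by simp
  have fx: "F x \<in> Tfin" using insert(4) by simp
  have s: "(\<lambda>w. \<Sum>i\<in>A. F i w) \<in> Tfin" by (rule subsp_sum[OF Tfin_subsp insert(1) fA])
  have "NFT B \<phi> (\<lambda>w. F x w + (\<Sum>i\<in>A. F i w)) = (\<lambda>t. NFT B \<phi> (F x) t + NFT B \<phi> (\<lambda>w. \<Sum>i\<in>A. F i w) t)"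
    by (rule NFT_add[OF fx s])
  also have "\<dots> = (\<lambda>t. NFT B \<phi> (F x) t + (\<Sum>i\<in>A. NFT B \<phi> (F i) t))" using insert(3)[OF fA] by simp
  finally show ?case using insert(1,2) by simp
qed

lemma NFT_mono: "NFT B \<phi> (mono s) = NF B \<phi> s"
proof -
  have "NFT B \<phi> (mono s) = (\<lambda>t. \<Sum>w\<in>{s}. mono s w * NF B \<phi> w t)"
    by (rule NFT_superset[OF mono_Tfin]) (auto simp: mono_def)
  thus ?thesis by (simp add: mono_def)
qed

lemma supp_tmul1: "{w. tmul (mono [b]) f w \<noteq> 0} \<subseteq> (\<lambda>w. b # w) ` {w. f w \<noteq> 0}"
proof
  fix x assume "x \<in> {w. tmul (mono [b]) f w \<noteq> 0}"
  thus "x \<in> (\<lambda>w. b # w) ` {w. f w \<noteq> 0}" by (cases x) (auto simp: tmul_mono1 split: if_splits)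
qed

lemma NFT_tmul1: "f \<in> Tfin \<Longrightarrow> NFT B \<phi> (tmul (mono [b]) f) = (\<lambda>t. \<Sum>w\<in>{w. f w \<noteq> 0}. f w * NF B \<phi> (b # w) t)"
proof -
  assume f: "f \<in> Tfin"
  have bf: "tmul (mono [b]) f \<in> Tfin"
  proof -
    note supp_tmul1[of b f]
    thus ?thesis using f unfolding Tfin_def by (auto intro: finite_subset)
  qed
  have "NFT B \<phi> (tmul (mono [b]) f) = (\<lambda>t. \<Sum>w\<in>(\<lambda>w. b # w) ` {w. f w \<noteq> 0}. tmul (mono [b]) f w * NF B \<phi> w t)"
    using f supp_tmul1[of b f] unfolding Tfin_def
    by (intro NFT_superset[OF bf]) auto
  also have "\<dots> = (\<lambda>t. \<Sum>w\<in>{w. f w \<noteq> 0}. f w * NF B \<phi> (b # w) t)"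
    by (subst sum.reindex) (auto simp: inj_on_def tmul_mono1)
  finally show ?thesis .
qed

lemma NF_Tfin_and_cong: "NF B \<phi> w \<in> Tfin \<and> (\<lambda>t. mono w t - NF B \<phi> w t) \<in> WkB B \<phi>"
proof (induction B \<phi> w rule: NF.induct)
  case (1 B \<phi> w)
  show ?case
  proof (cases "fd B w")
    case (Some x)
    then obtain u a b v where f: "fd B w = Some (u,a,b,v)" by (cases x) auto
    have w: "w = u @ a # b # v" using fd_Some[OF f] by simp
    have IH1: "NF B \<phi> (u @ b # a # v) \<in> Tfin \<and> (\<lambda>t. mono (u @ b # a # v) t - NF B \<phi> (u @ b # a # v) t) \<in> WkB B \<phi>"
      by (rule 1(2)[OF f refl refl refl])
    have IH2: "NF B \<phi> (u @ z # v) \<in> Tfin \<and> (\<lambda>t. mono (u @ z # v) t - NF B \<phi> (u @ z # v) t) \<in> WkB B \<phi>"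
      if "z \<in> bsupp a b" for z
      by (rule 1(3)[OF f refl refl refl that])
    have eqN: "NF B \<phi> w = (\<lambda>t. NF B \<phi> (u @ b # a # v) t + (\<Sum>z\<in>bsupp a b. br a b z * NF B \<phi> (u @ z # v) t))"
      by (rule ext) (rule NF_Some[OF f])
    have s1: "(\<lambda>t. \<Sum>z\<in>bsupp a b. br a b z * NF B \<phi> (u @ z # v) t) \<in> Tfin"
      by (rule subsp_sum_scale[OF Tfin_subsp finite_bsupp conjunct1[OF IH2]])
    have T: "NF B \<phi> w \<in> Tfin" unfolding eqN by (rule subsp_add[OF Tfin_subsp conjunct1[OF IH1] s1])
    have "(\<lambda>t. mono w t - NF B \<phi> w t) = (\<lambda>t. (mono (u @ a # b # v) t - mono (u @ b # a # v) t - (\<Sum>z\<in>bsupp a b. br a b z * mono (u @ z # v) t))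
       + ((mono (u @ b # a # v) t - NF B \<phi> (u @ b # a # v) t) + (\<Sum>z\<in>bsupp a b. br a b z * (mono (u @ z # v) t - NF B \<phi> (u @ z # v) t))))"
    proof (rule ext)
      fix t
      have d: "(\<Sum>z\<in>bsupp a b. br a b z * (mono (u @ z # v) t - NF B \<phi> (u @ z # v) t))
        = (\<Sum>z\<in>bsupp a b. br a b z * mono (u @ z # v) t) - (\<Sum>z\<in>bsupp a b. br a b z * NF B \<phi> (u @ z # v) t)"
        by (simp add: right_diff_distrib sum_subtractf)
      show "mono w t - NF B \<phi> w t = (mono (u @ a # b # v) t - mono (u @ b # a # v) t - (\<Sum>z\<in>bsupp a b. br a b z * mono (u @ z # v) t))
       + ((mono (u @ b # a # v) t - NF B \<phi> (u @ b # a # v) t) + (\<Sum>z\<in>bsupp a b. br a b z * (mono (u @ z # v) t - NF B \<phi> (u @ z # v) t)))"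
        unfolding d eqN by (simp add: w algebra_simps)
    qed
    also have "\<dots> \<in> WkB B \<phi>"
      by (rule subsp_add[OF WkB_subsp gen_rel_in subsp_add[OF WkB_subsp conjunct2[OF IH1]
          subsp_sum_scale[OF WkB_subsp finite_bsupp conjunct2[OF IH2]]]])
    finally show ?thesis using T by simp
  next
    case None
    show ?thesis
    proof (cases "w \<noteq> [] \<and> last w \<in> B")
      case True
      have IH: "NF B \<phi> (butlast w) \<in> Tfin \<and> (\<lambda>t. mono (butlast w) t - NF B \<phi> (butlast w) t) \<in> WkB B \<phi>"
        by (rule 1(1)[OF None True])
      have eqN: "NF B \<phi> w = (\<lambda>t. \<phi> (last w) * NF B \<phi> (butlast w) t)"
        by (rule ext) (rule NF_None1[OF None], use True in auto)
      have w: "w = butlast w @ [last w]" using True by simp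
      have T: "NF B \<phi> w \<in> Tfin" unfolding eqN by (rule subsp_scale[OF Tfin_subsp conjunct1[OF IH]])
      have "(\<lambda>t. mono w t - NF B \<phi> w t) = (\<lambda>t. (mono (butlast w @ [last w]) t - \<phi> (last w) * mono (butlast w) t)
          + \<phi> (last w) * (mono (butlast w) t - NF B \<phi> (butlast w) t))"
        unfolding eqN by (rule ext) (subst (1) w, simp add: algebra_simps)
      also have "\<dots> \<in> WkB B \<phi>"
        using True by (intro subsp_add[OF WkB_subsp gen_chr_in subsp_scale[OF WkB_subsp conjunct2[OF IH]]]) auto
      finally show ?thesis using T by simp
    next
      case False
      have eqN: "NF B \<phi> w = mono w" using NF_None2[OF None False] .
      show ?thesis unfolding eqN using subsp_zero[OF WkB_subsp] by simp
    qed
  qed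
qed

lemma NFT_cong: "f \<in> Tfin \<Longrightarrow> NFT B \<phi> f \<in> Tfin \<and> (\<lambda>t. f t - NFT B \<phi> f t) \<in> WkB B \<phi>"
proof -
  assume f: "f \<in> Tfin"
  define F where "F = {w. f w \<noteq> 0}"
  have F: "finite F" using f by (simp add: F_def Tfin_fin)
  have e1: "NFT B \<phi> f = (\<lambda>t. \<Sum>w\<in>F. f w * NF B \<phi> w t)" by (simp add: NFT_def F_def)
  have e2: "f = (\<lambda>t. \<Sum>w\<in>F. f w * mono w t)" using Tfin_expand[OF f] by (simp add: F_def)
  have "NFT B \<phi> f \<in> Tfin" unfolding e1
    by (rule subsp_sum_scale[OF Tfin_subsp F conjunct1[OF NF_Tfin_and_cong]])
  moreover have "(\<lambda>t. f t - NFT B \<phi> f t) = (\<lambda>t. \<Sum>w\<in>F. f w * (mono w t - NF B \<phi> w t))"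
    unfolding e1 by (subst (1) e2) (simp add: right_diff_distrib sum_subtractf)
  moreover have "\<dots> \<in> WkB B \<phi>"
    by (rule subsp_sum_scale[OF WkB_subsp F conjunct2[OF NF_Tfin_and_cong]])
  ultimately show ?thesis by simp
qed

context nfl
begin

lemma NF_R1: "N (u @ a # b # v) t = N (u @ b # a # v) t + (\<Sum>z\<in>bsupp a b. br a b z * N (u @ z # v) t)"
proof (cases "a = b")
  case True
  have "bsupp a a = {}" by (simp add: bsupp_def br_self)
  thus ?thesis using True by simp
next
  case False
  then consider "gtB B a b" | "gtB B b a" using gtB_total by blast
  thus ?thesis
  proof cases
    case 1 show ?thesis by (rule R1D[OF conjunct1[OF main] 1])
  next
    case 2
    have "N (u @ b # a # v) t = N (u @ a # b # v) t + (\<Sum>z\<in>bsupp b a. br b a z * N (u @ z # v) t)"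
      by (rule R1D[OF conjunct1[OF main] 2])
    thus ?thesis unfolding sum_bsupp_anti[of b a] by simp
  qed
qed

lemma NF_R2: "y \<in> B \<Longrightarrow> N (u @ [y]) t = \<phi> y * N u t"
  by (rule R2D[OF conjunct2[OF main]])

lemma NFT_gens: "g \<in> gens B \<phi> \<Longrightarrow> NFT B \<phi> g = (\<lambda>t. 0)"
proof -
  assume "g \<in> gens B \<phi>"
  then consider u v x y where "g = tmul (tmul (mono u) (rel x y)) (mono v)"
    | u x where "x \<in> B" "g = tmul (mono u) (\<lambda>w. mono [x] w - \<phi> x * mono [] w)" unfolding gens_def by blast
  thus ?thesis
  proof cases
    case 1
    have s: "(\<lambda>w. \<Sum>z\<in>bsupp x y. br x y z * mono (u @ z # v) w) \<in> Tfin"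
      by (rule subsp_sum_scale[OF Tfin_subsp finite_bsupp mono_Tfin])
    have s2: "(\<lambda>w. mono (u @ x # y # v) w - mono (u @ y # x # v) w) \<in> Tfin"
      by (rule subsp_diff[OF Tfin_subsp mono_Tfin mono_Tfin])
    show ?thesis unfolding 1 gen_rel
      using NFT_diff[OF s2 s, of B \<phi>] NFT_diff[OF mono_Tfin mono_Tfin, of B \<phi> "u @ x # y # v" "u @ y # x # v"]
        NFT_sum[of "bsupp x y" "\<lambda>z w. br x y z * mono (u @ z # v) w" B \<phi>]
        NFT_scale[OF mono_Tfin, of B \<phi>]
      by (simp add: NFT_mono NF_R1[of u x y v] subsp_scale[OF Tfin_subsp])
  next
    case 2
    show ?thesis unfolding 2(2) gen_chr
      using NFT_diff[OF mono_Tfin subsp_scale[OF Tfin_subsp mono_Tfin], of B \<phi> "u @ [x]" "\<phi> x" u]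
        NFT_scale[OF mono_Tfin, of B \<phi> "\<phi> x" u]
      by (simp add: NFT_mono NF_R2[OF 2(1)])
  qed
qed

lemma NFT_WkB: "f \<in> WkB B \<phi> \<Longrightarrow> NFT B \<phi> f = (\<lambda>t. 0)"
proof -
  have "subsp {f. f \<in> Tfin \<and> NFT B \<phi> f = (\<lambda>t. 0)}"
    unfolding subsp_def using Tfin_subsp
    by (auto simp: NFT_add NFT_scale NFT_zero subsp_add subsp_scale subsp_zero)
  moreover have "gens B \<phi> \<subseteq> {f. f \<in> Tfin \<and> NFT B \<phi> f = (\<lambda>t. 0)}"
    using gens_Tfin NFT_gens by auto
  ultimately show "f \<in> WkB B \<phi> \<Longrightarrow> NFT B \<phi> f = (\<lambda>t. 0)"
    unfolding WkB_def using lspan_min by blast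
qed

lemma NF_nil: "N [] = mono []"
  by (rule NF_None2) auto

lemma one_notin: "mono [] \<notin> WkB B \<phi>"
proof
  assume "mono [] \<in> WkB B \<phi>"
  hence "NFT B \<phi> (mono []) = (\<lambda>t. 0)" by (rule NFT_WkB)
  hence "mono [] [] = (0::complex)" by (simp add: NFT_mono NF_nil fun_eq_iff)
  thus False by (simp add: mono_def)
qed

end


fun isLH :: "gb \<Rightarrow> bool" where
  "isLH (L _) = True" | "isLH (H _) = True" | "isLH _ = False"

definition lhc :: "gb list \<Rightarrow> nat" where "lhc w = length (filter isLH w)"

lemma lhc_simps[simp]: "lhc [] = 0" "lhc (x # w) = (if isLH x then Suc (lhc w) else lhc w)"
  "lhc (u @ v) = lhc u + lhc v"
  by (auto simp: lhc_def)

definition nrm :: "gb set \<Rightarrow> gb list \<Rightarrow> bool" where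
  "nrm B s \<longleftrightarrow> sorted s \<and> (\<forall>x\<in>set s. x \<notin> B)"

lemma br_lhc: "br a b z \<noteq> 0 \<Longrightarrow> (isLH a \<or> isLH b) \<and> (isLH z \<longrightarrow> isLH a \<and> isLH b)"
  by (cases a; cases b; cases z) (auto split: if_splits)

lemma br_lhc2: "z \<in> bsupp a b \<Longrightarrow> lhc (u @ z # v) < lhc (u @ a # b # v)"
  using br_lhc[of a b z] by (auto simp: bsupp_def)

lemma nodesc_nrm: "(\<And>u c d r. w = u @ c # d # r \<Longrightarrow> \<not> gtB B c d) \<Longrightarrow> (w = [] \<or> last w \<notin> B) \<Longrightarrow> nrm B w"
proof (induction w)
  case Nil thus ?case by (simp add: nrm_def)
next
  case (Cons x w)
  note IH = Cons.IH and prems = Cons.prems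
  show ?case
  proof (cases w)
    case Nil thus ?thesis using prems by (simp add: nrm_def)
  next
    case (Cons y w')
    note Cons2 = this
    have nw: "nrm B w"
    proof (rule IH)
      show "\<not> gtB B c d" if "w = u @ c # d # r" for u c d r using prems(1)[of "x # u" c d r] that by simp
      show "w = [] \<or> last w \<notin> B" using prems(2) Cons2 by simp
    qed
    have nd: "\<not> gtB B x y" using prems(1)[of "[]" x y w'] Cons2 by simp
    have yB: "y \<notin> B" using nw Cons2 by (simp add: nrm_def)
    have xB: "x \<notin> B" using nd yB by (auto simp: gtB_def)
    have xy: "x \<le> y" using nd xB yB by (auto simp: gtB_def)
    have "\<forall>z\<in>set w. y \<le> z" using nw Cons2 by (simp add: nrm_def)
    hence "\<forall>z\<in>set w. x \<le> z" using xy by auto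
    thus ?thesis using nw xB by (simp add: nrm_def)
  qed
qed

lemma nrm_fd: "nrm B s \<Longrightarrow> fd B s = None"
proof (rule ccontr)
  assume n: "nrm B s" and "fd B s \<noteq> None"
  then obtain u a b v where f: "fd B s = Some (u,a,b,v)" by auto
  from fd_Some[OF f] have s: "s = u @ a # b # v" and ab: "gtB B a b" by auto
  have "a \<notin> B" "b \<notin> B" using n s by (auto simp: nrm_def)
  hence "b < a" using ab by (auto simp: gtB_def)
  moreover have "a \<le> b" using n s by (auto simp: nrm_def sorted_append)
  ultimately show False by simp
qed

lemma nrm_NF: "nrm B s \<Longrightarrow> NF B \<phi> s = mono s"
proof -
  assume n: "nrm B s"
  have "\<not> (s \<noteq> [] \<and> last s \<in> B)" using n by (auto simp: nrm_def)
  thus ?thesis using NF_None2[OF nrm_fd[OF n]] by simp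
qed

lemma NF_supp: "NF B \<phi> w t \<noteq> 0 \<Longrightarrow> nrm B t \<and> lhc t \<le> lhc w"
proof (induction B \<phi> w arbitrary: t rule: NF.induct)
  case (1 B \<phi> w)
  show ?case
  proof (cases "fd B w")
    case (Some x)
    then obtain u a b v where f: "fd B w = Some (u,a,b,v)" by (cases x) auto
    have w: "w = u @ a # b # v" using fd_Some[OF f] by simp
    have "NF B \<phi> (u @ b # a # v) t \<noteq> 0 \<or> (\<exists>z\<in>bsupp a b. NF B \<phi> (u @ z # v) t \<noteq> 0)"
      using 1(4) NF_Some[OF f, of \<phi> t] by (auto intro: ccontr simp: sum.neutral)
    thus ?thesis
    proof
      assume "NF B \<phi> (u @ b # a # v) t \<noteq> 0"
      moreover have "lhc (u @ b # a # v) = lhc w" unfolding w by (simp add: lhc_def)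
      ultimately show ?thesis using 1(2)[OF f refl refl refl] by simp
    next
      assume "\<exists>z\<in>bsupp a b. NF B \<phi> (u @ z # v) t \<noteq> 0"
      then obtain z where z: "z \<in> bsupp a b" "NF B \<phi> (u @ z # v) t \<noteq> 0" by blast
      from 1(3)[OF f refl refl refl z] br_lhc2[OF z(1), of u v] show ?thesis using w by simp
    qed
  next
    case None
    show ?thesis
    proof (cases "w \<noteq> [] \<and> last w \<in> B")
      case True
      have "NF B \<phi> (butlast w) t \<noteq> 0" using 1(4) NF_None1[OF None, of \<phi> t] True by auto
      from 1(1)[OF None True this] have "nrm B t \<and> lhc t \<le> lhc (butlast w)" .
      moreover have "lhc (butlast w) \<le> lhc w"
        using True by (metis append_butlast_last_id le_add1 lhc_simps(3))
      ultimately show ?thesis by simp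
    next
      case False
      have n: "nrm B w" using nodesc_nrm[of w B] fd_None[OF None] False by blast
      have "t = w" using 1(4) NF_None2[OF None False] by (auto simp: mono_def split: if_splits)
      thus ?thesis using n by simp
    qed
  qed
qed

definition prodB :: "gb set \<Rightarrow> (gb \<Rightarrow> complex) \<Rightarrow> gb list \<Rightarrow> complex" where
  "prodB B \<phi> w = prod_list (map (\<lambda>x. if x \<in> B then \<phi> x else 1) w)"

definition zpart :: "gb set \<Rightarrow> gb list \<Rightarrow> gb list" where
  "zpart B w = filter (\<lambda>x. x \<notin> B) w"

lemma sort_swap: "sort (filter P (u @ b # a # v)) = sort (filter P (u @ a # b # v))"
proof -
  have "mset (filter P (u @ a # b # v)) = mset (filter P (u @ b # a # v))" by simp
  thus ?thesis by (metis properties_for_sort sorted_sort mset_sort)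
qed

lemma NF_top: "lhc t = lhc w \<Longrightarrow> (\<forall>x\<in>set w. x \<in> B \<longrightarrow> \<not> isLH x) \<Longrightarrow>
   NF B \<phi> w t = prodB B \<phi> w * mono (sort (zpart B w)) t"
proof (induction B \<phi> w rule: NF.induct)
  case (1 B \<phi> w)
  show ?case
  proof (cases "fd B w")
    case (Some x)
    then obtain u a b v where f: "fd B w = Some (u,a,b,v)" by (cases x) auto
    have w: "w = u @ a # b # v" using fd_Some[OF f] by simp
    have z0: "NF B \<phi> (u @ z # v) t = 0" if "z \<in> bsupp a b" for z
      using NF_supp[of B \<phi> "u @ z # v" t] br_lhc2[OF that, of u v] 1(4) w by fastforce
    have e1: "NF B \<phi> (u @ b # a # v) t = prodB B \<phi> (u @ b # a # v) * mono (sort (zpart B (u @ b # a # v))) t"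
      using 1(2)[OF f refl refl refl] 1(4,5) w by auto
    have "NF B \<phi> w t = NF B \<phi> (u @ b # a # v) t" using NF_Some[OF f, of \<phi> t] z0 by simp
    also have "\<dots> = prodB B \<phi> w * mono (sort (zpart B w)) t"
      unfolding e1 w zpart_def sort_swap by (simp add: prodB_def mult_ac)
    finally show ?thesis .
  next
    case None
    show ?thesis
    proof (cases "w \<noteq> [] \<and> last w \<in> B")
      case True
      have wd: "w = butlast w @ [last w]" using True by simp
      have lL: "\<not> isLH (last w)" using 1(5) True by auto
      have e: "NF B \<phi> (butlast w) t = prodB B \<phi> (butlast w) * mono (sort (zpart B (butlast w))) t"
      proof (rule 1(1)[OF None True])
        show "lhc t = lhc (butlast w)" using 1(4) lL by (subst (asm) wd) simp
        show "\<forall>x\<in>set (butlast w). x \<in> B \<longrightarrow> \<not> isLH x" using 1(5) by (meson in_set_butlastD)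
      qed
      have p: "prodB B \<phi> w = prodB B \<phi> (butlast w) * \<phi> (last w)"
        using True by (cases w rule: rev_cases) (auto simp: prodB_def)
      have z: "zpart B w = zpart B (butlast w)"
        using True by (cases w rule: rev_cases) (auto simp: zpart_def)
      have "NF B \<phi> w t = \<phi> (last w) * NF B \<phi> (butlast w) t" using NF_None1[OF None] True by simp
      also have "\<dots> = prodB B \<phi> w * mono (sort (zpart B w)) t"
        unfolding e p z by simp
      finally show ?thesis .
    next
      case False
      have n: "nrm B w" using nodesc_nrm[of w B] fd_None[OF None] False by blast
      have "prodB B \<phi> w = 1" using n by (induction w) (auto simp: prodB_def nrm_def)
      moreover have "zpart B w = w" using n by (auto simp: zpart_def nrm_def)
      moreover have "sort w = w" using n by (simp add: nrm_def sorted_sort_id)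
      ultimately show ?thesis using NF_None2[OF None False] by simp
    qed
  qed
qed

context nfl
begin

lemma NF_deriv: "y \<in> B \<Longrightarrow> N (u @ y # s) t = \<phi> y * N (u @ s) t
   + (\<Sum>j<length s. \<Sum>z\<in>bsupp y (s ! j). br y (s ! j) z * N (u @ s[j := z]) t)"
proof (induction s arbitrary: u)
  case Nil thus ?case using NF_R2[of y u t] by simp
next
  case (Cons a s)
  have "N (u @ y # a # s) t = N (u @ a # y # s) t + (\<Sum>z\<in>bsupp y a. br y a z * N (u @ z # s) t)"
    by (rule NF_R1)
  also have "N (u @ a # y # s) t = \<phi> y * N (u @ a # s) t
     + (\<Sum>j<length s. \<Sum>z\<in>bsupp y (s ! j). br y (s ! j) z * N (u @ a # s[j := z]) t)"
    using Cons.IH[of "u @ [a]", OF Cons.prems] by simp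
  finally show ?case unfolding length_Cons sum.lessThan_Suc_shift by (simp add: add_ac)
qed

end


lemma sum_count: "(\<Sum>j<length s. if s ! j = x then c else 0) = of_nat (count_list s x) * (c::complex)"
proof (induction s)
  case Nil thus ?case by simp
next
  case (Cons a s)
  show ?case unfolding length_Cons sum.lessThan_Suc_shift using Cons by (simp add: algebra_simps)
qed

lemma sort_zpart_upd: "nrm B s \<Longrightarrow> j < length s \<Longrightarrow> z \<in> B \<Longrightarrow> sort (zpart B (s[j := z])) = remove1 (s ! j) s"
proof -
  assume n: "nrm B s" and j: "j < length s" and z: "z \<in> B"
  have s: "s = take j s @ s ! j # drop (Suc j) s" using id_take_nth_drop[OF j] .
  have "s[j := z] = take j s @ z # drop (Suc j) s" using j by (simp add: upd_conv_take_nth_drop)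
  have f1: "filter (\<lambda>x. x \<notin> B) (take j s) = take j s"
    by (rule filter_True) (use n in \<open>auto simp: nrm_def dest: in_set_takeD\<close>)
  have f2: "filter (\<lambda>x. x \<notin> B) (drop (Suc j) s) = drop (Suc j) s"
    by (rule filter_True) (use n in \<open>auto simp: nrm_def dest: in_set_dropD\<close>)
  have zp: "zpart B (s[j := z]) = take j s @ drop (Suc j) s"
    using \<open>s[j := z] = _\<close> z f1 f2 by (simp add: zpart_def)
  have "mset (remove1 (s ! j) s) = mset (take j s @ drop (Suc j) s)"
  proof -
    have "mset s = mset (take j s @ drop (Suc j) s) + {#s ! j#}" by (subst s) simp
    thus ?thesis by simp
  qed
  moreover have "sorted (remove1 (s ! j) s)" using n by (simp add: nrm_def sorted_remove1)
  ultimately show ?thesis unfolding zp by (metis properties_for_sort)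
qed

lemma sum_remove1:
  assumes A: "finite A" and srt: "\<And>s. s \<in> A \<Longrightarrow> sorted s"
  shows "(\<Sum>s\<in>A. F s * (of_nat (count_list s x) * mono (remove1 x s) t))
     = (if insort x t \<in> A then F (insort x t) * of_nat (count_list (insort x t) x) else (0::complex))"
proof -
  have key: "s = insort x t" if "s \<in> A" "count_list s x \<noteq> 0" "remove1 x s = t" for s
  proof -
    have "x \<in> set s" using that(2) by (simp add: count_list_0_iff)
    thus ?thesis using insort_remove1[of x s] srt[OF that(1)] that(3) by simp
  qed
  show ?thesis
  proof (cases "insort x t \<in> A")
    case True
    have "(\<Sum>s\<in>A. F s * (of_nat (count_list s x) * mono (remove1 x s) t))
        = F (insort x t) * (of_nat (count_list (insort x t) x) * mono (remove1 x (insort x t)) t)"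
      using key by (intro sum_single[OF A True]) (auto simp: mono_def)
    thus ?thesis using True by (simp add: mono_def)
  next
    case False
    have "(\<Sum>s\<in>A. F s * (of_nat (count_list s x) * mono (remove1 x s) t)) = 0"
      using key False by (intro sum.neutral) (auto simp: mono_def)
    thus ?thesis using False by simp
  qed
qed

lemma NFT_supp: "NFT B \<phi> f t \<noteq> 0 \<Longrightarrow> \<exists>w. f w \<noteq> 0 \<and> NF B \<phi> w t \<noteq> 0"
proof (rule ccontr)
  assume a: "NFT B \<phi> f t \<noteq> 0" and "\<not> (\<exists>w. f w \<noteq> 0 \<and> NF B \<phi> w t \<noteq> 0)"
  hence "\<forall>w\<in>{w. f w \<noteq> 0}. f w * NF B \<phi> w t = 0" by auto
  hence "NFT B \<phi> f t = 0" unfolding NFT_def by (simp add: sum.neutral)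
  thus False using a by simp
qed

lemma NFT_nrm: "NFT B \<phi> f t \<noteq> 0 \<Longrightarrow> nrm B t"
  using NFT_supp NF_supp by blast

context nfl
begin

lemma Op:
  assumes S: "subsp S" and WS: "WkB B \<phi> \<subseteq> S" and ST: "S \<subseteq> Tfin"
    and cl: "\<And>b f. f \<in> S \<Longrightarrow> tmul (mono [b]) f \<in> S" and f: "f \<in> S" and y: "y \<in> B"
  shows "(\<lambda>w. tmul (mono [y]) f w - \<phi> y * f w) \<in> S \<and>
     NFT B \<phi> (\<lambda>w. tmul (mono [y]) f w - \<phi> y * f w) = (\<lambda>t. \<Sum>s\<in>{s. NFT B \<phi> f s \<noteq> 0}. NFT B \<phi> f s *
        (\<Sum>j<length s. \<Sum>z\<in>bsupp y (s ! j). br y (s ! j) z * N (s[j := z]) t))"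
proof
  show "(\<lambda>w. tmul (mono [y]) f w - \<phi> y * f w) \<in> S"
    by (rule subsp_diff[OF S cl[OF f] subsp_scale[OF S f]])
next
  define P where "P = NFT B \<phi> f"
  have fT: "f \<in> Tfin" using f ST by auto
  have PT: "P \<in> Tfin" and fP: "(\<lambda>t. f t - P t) \<in> WkB B \<phi>" using NFT_cong[OF fT] by (auto simp: P_def)
  have tfT: "tmul (mono [y]) f \<in> Tfin" using cl[OF f] ST by auto
  have tPT: "tmul (mono [y]) P \<in> Tfin"
    using PT supp_tmul1[of y P] unfolding Tfin_def by (auto intro: finite_subset)
  have "tmul (mono [y]) (\<lambda>t. f t - P t) \<in> WkB B \<phi>" by (rule WkB_left[OF fP])
  moreover have "tmul (mono [y]) (\<lambda>t. f t - P t) = (\<lambda>w. tmul (mono [y]) f w - tmul (mono [y]) P w)"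
    unfolding tmul_mono1 by (auto simp: fun_eq_iff split: list.splits)
  ultimately have "NFT B \<phi> (\<lambda>w. tmul (mono [y]) f w - tmul (mono [y]) P w) = (\<lambda>t. 0)"
    using NFT_WkB by simp
  hence e1: "NFT B \<phi> (tmul (mono [y]) f) = NFT B \<phi> (tmul (mono [y]) P)"
    unfolding NFT_diff[OF tfT tPT] by (simp add: fun_eq_iff)
  have nP: "nrm B s" if "P s \<noteq> 0" for s using that NFT_nrm by (simp add: P_def)
  have finP: "finite {s. P s \<noteq> 0}" using PT by (simp add: Tfin_def)
  have e2: "NFT B \<phi> (tmul (mono [y]) P) t = (\<Sum>s\<in>{s. P s \<noteq> 0}. P s * N (y # s) t)" for t
    using NFT_tmul1[OF PT] by simp
  have e3: "N (y # s) t = \<phi> y * mono s t + (\<Sum>j<length s. \<Sum>z\<in>bsupp y (s ! j). br y (s ! j) z * N (s[j := z]) t)"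
    if "P s \<noteq> 0" for s t
    using NF_deriv[OF y, of "[]" s t] nrm_NF[OF nP[OF that]] by simp
  have e4: "(\<Sum>s\<in>{s. P s \<noteq> 0}. P s * mono s t) = P t" for t
    using Tfin_expand[OF PT] by metis
  have sf: "(\<lambda>w. \<phi> y * f w) \<in> Tfin" by (rule subsp_scale[OF Tfin_subsp fT])
  show "NFT B \<phi> (\<lambda>w. tmul (mono [y]) f w - \<phi> y * f w) = (\<lambda>t. \<Sum>s\<in>{s. NFT B \<phi> f s \<noteq> 0}. NFT B \<phi> f s *
        (\<Sum>j<length s. \<Sum>z\<in>bsupp y (s ! j). br y (s ! j) z * N (s[j := z]) t))"
  proof (rule ext)
    fix t
    have "NFT B \<phi> (\<lambda>w. tmul (mono [y]) f w - \<phi> y * f w) t = NFT B \<phi> (tmul (mono [y]) f) t - \<phi> y * P t"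
      unfolding NFT_diff[OF tfT sf] NFT_scale[OF fT] P_def by simp
    also have "\<dots> = (\<Sum>s\<in>{s. P s \<noteq> 0}. P s * N (y # s) t) - \<phi> y * P t" unfolding e1 e2 by simp
    also have "(\<Sum>s\<in>{s. P s \<noteq> 0}. P s * N (y # s) t) = \<phi> y * (\<Sum>s\<in>{s. P s \<noteq> 0}. P s * mono s t)
        + (\<Sum>s\<in>{s. P s \<noteq> 0}. P s * (\<Sum>j<length s. \<Sum>z\<in>bsupp y (s ! j). br y (s ! j) z * N (s[j := z]) t))"
    proof -
      have "(\<Sum>s\<in>{s. P s \<noteq> 0}. P s * N (y # s) t) = (\<Sum>s\<in>{s. P s \<noteq> 0}. P s * (\<phi> y * mono s t
          + (\<Sum>j<length s. \<Sum>z\<in>bsupp y (s ! j). br y (s ! j) z * N (s[j := z]) t)))"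
        by (rule sum.cong[OF refl]) (simp add: e3)
      thus ?thesis by (simp add: distrib_left sum.distrib sum_distrib_left mult_ac)
    qed
    finally show "NFT B \<phi> (\<lambda>w. tmul (mono [y]) f w - \<phi> y * f w) t = (\<Sum>s\<in>{s. NFT B \<phi> f s \<noteq> 0}. NFT B \<phi> f s *
        (\<Sum>j<length s. \<Sum>z\<in>bsupp y (s ! j). br y (s ! j) z * N (s[j := z]) t))"
      using e4[of t] by (simp add: P_def)
  qed
qed

end


lemma prod_list_ones: "(\<And>x. x \<in> set xs \<Longrightarrow> f x = (1::complex)) \<Longrightarrow> prod_list (map f xs) = 1"
  by (induction xs) auto

lemma prodB_upd: "nrm B s \<Longrightarrow> j < length s \<Longrightarrow> z \<in> B \<Longrightarrow> prodB B \<phi> (s[j := z]) = \<phi> z"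
proof -
  assume n: "nrm B s" and j: "j < length s" and z: "z \<in> B"
  have e: "s[j := z] = take j s @ z # drop (Suc j) s" using j by (simp add: upd_conv_take_nth_drop)
  have 1: "prodB B \<phi> (take j s) = 1" using n unfolding prodB_def nrm_def
    by (intro prod_list_ones) (auto dest: in_set_takeD)
  have 2: "prodB B \<phi> (drop (Suc j) s) = 1" using n unfolding prodB_def nrm_def
    by (intro prod_list_ones) (auto dest: in_set_dropD)
  show ?thesis using 1 2 z unfolding e by (simp add: prodB_def)
qed

lemma lhc_upd: "j < length s \<Longrightarrow> lhc (s[j := z]) + (if isLH (s ! j) then 1 else 0) = lhc s + (if isLH z then 1 else 0)"
proof -
  assume j: "j < length s"
  have e: "s[j := z] = take j s @ z # drop (Suc j) s" using j by (simp add: upd_conv_take_nth_drop)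
  have e2: "s = take j s @ s ! j # drop (Suc j) s" using id_take_nth_drop[OF j] .
  show ?thesis by (subst e, subst (3) e2) simp
qed

lemma lhc_remove1: "lhc (remove1 x s) \<le> lhc s"
  by (induction s) auto

lemma set_upd_B: "nrm B s \<Longrightarrow> x \<in> set (s[j := z]) \<Longrightarrow> x \<in> B \<Longrightarrow> x = z"
  using set_update_subset_insert[of s j z] by (auto simp: nrm_def)

locale wsetup =
  fixes m n :: nat and \<psi> :: "gb \<Rightarrow> complex"
  assumes mpos: "m > 0" and par: "even (m + n)" and wf: "whittaker_fun m n \<psi>"
begin

abbreviation "B0 \<equiv> Gsub_basis m n"

definition p :: int where "p = int m + int n - 1"

lemma inB0: "x \<in> B0 \<longleftrightarrow> (case x of L k \<Rightarrow> k \<ge> int m | H k \<Rightarrow> k \<ge> int m | I k \<Rightarrow> k \<ge> int n | J k \<Rightarrow> k \<ge> int n | _ \<Rightarrow> True)"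
  by (cases x) (auto simp: Gsub_basis_def)

lemma clos0: "x \<in> B0 \<Longrightarrow> y \<in> B0 \<Longrightarrow> br x y z \<noteq> 0 \<Longrightarrow> z \<in> B0"
  unfolding inB0 by (cases x; cases y; cases z) (auto split: if_splits)

lemma chr0: "x \<in> B0 \<Longrightarrow> y \<in> B0 \<Longrightarrow> (\<Sum>z\<in>bsupp x y. br x y z * \<psi> z) = 0"
  using wf unfolding whittaker_fun_def bsupp_def by blast

sublocale nfl B0 \<psi>
  by unfold_locales (auto intro: clos0 chr0)

lemma psiI: "k \<ge> int m + int n \<Longrightarrow> \<psi> (I k) = 0"
proof -
  assume k: "k \<ge> int m + int n"
  have "(\<Sum>z\<in>bsupp (H (int m)) (I (k - int m)). br (H (int m)) (I (k - int m)) z * \<psi> z) = 0"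
    by (rule chr0) (use k in \<open>auto simp: inB0\<close>)
  thus ?thesis unfolding sum_bsupp sum_Sup7 by simp
qed

lemma psiJ: "k \<ge> int m + int n \<Longrightarrow> \<psi> (J k) = 0"
proof -
  assume k: "k \<ge> int m + int n"
  have "(\<Sum>z\<in>bsupp (H (int m)) (J (k - int m)). br (H (int m)) (J (k - int m)) z * \<psi> z) = 0"
    by (rule chr0) (use k in \<open>auto simp: inB0\<close>)
  thus ?thesis unfolding sum_bsupp sum_Sup7 by simp
qed

lemma NF_upd_top:
  assumes s: "nrm B0 s" and j: "j < length s" and z: "z \<in> B0" "\<not> isLH z"
    and lt: "lhc t = lhc (s[j := z])"
  shows "N (s[j := z]) t = \<psi> z * mono (remove1 (s ! j) s) t"
proof -
  have "\<forall>x\<in>set (s[j := z]). x \<in> B0 \<longrightarrow> \<not> isLH x" using set_upd_B[OF s] z by blast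
  from NF_top[OF lt this] show ?thesis
    unfolding prodB_upd[OF s j z(1)] sort_zpart_upd[OF s j z(1)] .
qed

lemma DI:
  assumes s: "nrm B0 s" and i0: "\<And>x. x \<in> set s \<Longrightarrow> isLH x \<Longrightarrow> idx x \<ge> i0"
    and lt: "lhc t + 1 = lhc s" and k: "k = p - i0"
  shows "(\<Sum>j<length s. \<Sum>z\<in>bsupp (I k) (s ! j). br (I k) (s ! j) z * N (s[j := z]) t)
   = \<psi> (I p) * (of_int (2 * i0 - p) * (of_nat (count_list s (L i0)) * mono (remove1 (L i0) s) t)
        - of_nat (count_list s (H i0)) * mono (remove1 (H i0) s) t)"
proof -
  have each: "(\<Sum>z\<in>bsupp (I k) (s ! j). br (I k) (s ! j) z * N (s[j := z]) t)
     = (if s ! j = L i0 then of_int (2 * i0 - p) * \<psi> (I p) * mono (remove1 (L i0) s) t else 0)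
     + (if s ! j = H i0 then - \<psi> (I p) * mono (remove1 (H i0) s) t else 0)" if j: "j < length s" for j
  proof -
    have sj: "s ! j \<in> set s" using j by simp
    show ?thesis
    proof (cases "s ! j")
      case (L i)
      have ii: "i \<ge> i0" using i0[OF sj] L by simp
      have zB: "I (i + k) \<in> B0" using ii k mpos by (auto simp: inB0 p_def)
      have lt2: "lhc t = lhc (s[j := I (i + k)])" using lhc_upd[OF j, of "I (i + k)"] lt L by simp
      have "(\<Sum>z\<in>bsupp (I k) (s ! j). br (I k) (s ! j) z * N (s[j := z]) t) = of_int (i - k) * N (s[j := I (i + k)]) t"
        unfolding sum_bsupp sum_Sup7 L by (simp add: add.commute)
      also have "\<dots> = of_int (i - k) * (\<psi> (I (i + k)) * mono (remove1 (L i) s) t)"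
        using NF_upd_top[OF s j zB _ lt2] L by simp
      finally have e: "(\<Sum>z\<in>bsupp (I k) (s ! j). br (I k) (s ! j) z * N (s[j := z]) t) = of_int (i - k) * (\<psi> (I (i + k)) * mono (remove1 (L i) s) t)" .
      show ?thesis
      proof (cases "i = i0")
        case True
        have q1: "i0 + k = p" "i0 - k = 2 * i0 - p" using k by auto
        show ?thesis using L e True by (simp add: q1)
      next
        case False
        hence "i + k \<ge> int m + int n" using ii k by (simp add: p_def)
        thus ?thesis using L False e by (simp add: psiI)
      qed
    next
      case (H i)
      have ii: "i \<ge> i0" using i0[OF sj] H by simp
      have zB: "I (i + k) \<in> B0" using ii k mpos by (auto simp: inB0 p_def)
      have lt2: "lhc t = lhc (s[j := I (i + k)])" using lhc_upd[OF j, of "I (i + k)"] lt H by simp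
      have "(\<Sum>z\<in>bsupp (I k) (s ! j). br (I k) (s ! j) z * N (s[j := z]) t) = - N (s[j := I (i + k)]) t"
        unfolding sum_bsupp sum_Sup7 H by (simp add: add.commute)
      also have "\<dots> = - (\<psi> (I (i + k)) * mono (remove1 (H i) s) t)"
        using NF_upd_top[OF s j zB _ lt2] H by simp
      finally have e: "(\<Sum>z\<in>bsupp (I k) (s ! j). br (I k) (s ! j) z * N (s[j := z]) t) = - (\<psi> (I (i + k)) * mono (remove1 (H i) s) t)" .
      show ?thesis
      proof (cases "i = i0")
        case True
        have q1: "i0 + k = p" using k by auto
        show ?thesis using H e True by (simp add: q1)
      next
        case False
        hence "i + k \<ge> int m + int n" using ii k by (simp add: p_def)
        thus ?thesis using H False e by (simp add: psiI)
      qed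
    qed (simp_all add: bsupp_def)
  qed
  have "(\<Sum>j<length s. \<Sum>z\<in>bsupp (I k) (s ! j). br (I k) (s ! j) z * N (s[j := z]) t)
     = (\<Sum>j<length s. (if s ! j = L i0 then of_int (2 * i0 - p) * \<psi> (I p) * mono (remove1 (L i0) s) t else 0)
     + (if s ! j = H i0 then - \<psi> (I p) * mono (remove1 (H i0) s) t else 0))"
    by (rule sum.cong[OF refl]) (simp add: each)
  also have "\<dots> = of_nat (count_list s (L i0)) * (of_int (2 * i0 - p) * \<psi> (I p) * mono (remove1 (L i0) s) t)
      + of_nat (count_list s (H i0)) * (- \<psi> (I p) * mono (remove1 (H i0) s) t)"
    by (simp only: sum.distrib sum_count)
  finally show ?thesis by (simp add: algebra_simps)
qed

lemma DJ:
  assumes s: "nrm B0 s" and i0: "\<And>x. x \<in> set s \<Longrightarrow> isLH x \<Longrightarrow> idx x \<ge> i0"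
    and lt: "lhc t + 1 = lhc s" and k: "k = p - i0"
  shows "(\<Sum>j<length s. \<Sum>z\<in>bsupp (J k) (s ! j). br (J k) (s ! j) z * N (s[j := z]) t)
   = \<psi> (J p) * (of_int (2 * i0 - p) * (of_nat (count_list s (L i0)) * mono (remove1 (L i0) s) t)
        + of_nat (count_list s (H i0)) * mono (remove1 (H i0) s) t)"
proof -
  have each: "(\<Sum>z\<in>bsupp (J k) (s ! j). br (J k) (s ! j) z * N (s[j := z]) t)
     = (if s ! j = L i0 then of_int (2 * i0 - p) * \<psi> (J p) * mono (remove1 (L i0) s) t else 0)
     + (if s ! j = H i0 then \<psi> (J p) * mono (remove1 (H i0) s) t else 0)" if j: "j < length s" for j
  proof -
    have sj: "s ! j \<in> set s" using j by simp
    show ?thesis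
    proof (cases "s ! j")
      case (L i)
      have ii: "i \<ge> i0" using i0[OF sj] L by simp
      have zB: "J (i + k) \<in> B0" using ii k mpos by (auto simp: inB0 p_def)
      have lt2: "lhc t = lhc (s[j := J (i + k)])" using lhc_upd[OF j, of "J (i + k)"] lt L by simp
      have "(\<Sum>z\<in>bsupp (J k) (s ! j). br (J k) (s ! j) z * N (s[j := z]) t) = of_int (i - k) * N (s[j := J (i + k)]) t"
        unfolding sum_bsupp sum_Sup7 L by (simp add: add.commute)
      also have "\<dots> = of_int (i - k) * (\<psi> (J (i + k)) * mono (remove1 (L i) s) t)"
        using NF_upd_top[OF s j zB _ lt2] L by simp
      finally have e: "(\<Sum>z\<in>bsupp (J k) (s ! j). br (J k) (s ! j) z * N (s[j := z]) t) = of_int (i - k) * (\<psi> (J (i + k)) * mono (remove1 (L i) s) t)" .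
      show ?thesis
      proof (cases "i = i0")
        case True
        have q1: "i0 + k = p" "i0 - k = 2 * i0 - p" using k by auto
        show ?thesis using L e True by (simp add: q1)
      next
        case False
        hence "i + k \<ge> int m + int n" using ii k by (simp add: p_def)
        thus ?thesis using L False e by (simp add: psiJ)
      qed
    next
      case (H i)
      have ii: "i \<ge> i0" using i0[OF sj] H by simp
      have zB: "J (i + k) \<in> B0" using ii k mpos by (auto simp: inB0 p_def)
      have lt2: "lhc t = lhc (s[j := J (i + k)])" using lhc_upd[OF j, of "J (i + k)"] lt H by simp
      have "(\<Sum>z\<in>bsupp (J k) (s ! j). br (J k) (s ! j) z * N (s[j := z]) t) = N (s[j := J (i + k)]) t"
        unfolding sum_bsupp sum_Sup7 H by (simp add: add.commute)
      also have "\<dots> = (\<psi> (J (i + k)) * mono (remove1 (H i) s) t)"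
        using NF_upd_top[OF s j zB _ lt2] H by simp
      finally have e: "(\<Sum>z\<in>bsupp (J k) (s ! j). br (J k) (s ! j) z * N (s[j := z]) t) = (\<psi> (J (i + k)) * mono (remove1 (H i) s) t)" .
      show ?thesis
      proof (cases "i = i0")
        case True
        have q1: "i0 + k = p" using k by auto
        show ?thesis using H e True by (simp add: q1)
      next
        case False
        hence "i + k \<ge> int m + int n" using ii k by (simp add: p_def)
        thus ?thesis using H False e by (simp add: psiJ)
      qed
    qed (simp_all add: bsupp_def)
  qed
  have "(\<Sum>j<length s. \<Sum>z\<in>bsupp (J k) (s ! j). br (J k) (s ! j) z * N (s[j := z]) t)
     = (\<Sum>j<length s. (if s ! j = L i0 then of_int (2 * i0 - p) * \<psi> (J p) * mono (remove1 (L i0) s) t else 0)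
     + (if s ! j = H i0 then \<psi> (J p) * mono (remove1 (H i0) s) t else 0))"
    by (rule sum.cong[OF refl]) (simp add: each)
  also have "\<dots> = of_nat (count_list s (L i0)) * (of_int (2 * i0 - p) * \<psi> (J p) * mono (remove1 (L i0) s) t)
      + of_nat (count_list s (H i0)) * (\<psi> (J p) * mono (remove1 (H i0) s) t)"
    by (simp only: sum.distrib sum_count)
  finally show ?thesis by (simp add: algebra_simps)
qed

lemma NF_upd_top0:
  assumes s: "nrm B0 s" and j: "j < length s" and z: "z \<in> B0" "\<not> isLH z" and l0: "lhc s = 0"
  shows "N (s[j := z]) t = \<psi> z * mono (remove1 (s ! j) s) t"
proof -
  have l1: "lhc (s[j := z]) = 0" using lhc_upd[OF j, of z] l0 z by (simp split: if_splits)
  show ?thesis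
  proof (cases "lhc t = 0")
    case True thus ?thesis using NF_upd_top[OF s j z] l1 by simp
  next
    case False
    have "N (s[j := z]) t = 0" using NF_supp[of B0 \<psi> "s[j := z]" t] l1 False by auto
    moreover have "t \<noteq> remove1 (s ! j) s" using lhc_remove1[of "s ! j" s] l0 False by auto
    ultimately show ?thesis by (simp add: mono_def)
  qed
qed

lemma DHL:
  assumes s: "nrm B0 s" and l0: "lhc s = 0" and j0: "\<And>x. x \<in> set s \<Longrightarrow> idx x \<ge> j0"
    and a: "a = p - j0" and j0n: "j0 < int n"
  shows "(\<Sum>j<length s. \<Sum>z\<in>bsupp (H a) (s ! j). br (H a) (s ! j) z * N (s[j := z]) t)
   = \<psi> (I p) * (of_nat (count_list s (I j0)) * mono (remove1 (I j0) s) t)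
        - \<psi> (J p) * (of_nat (count_list s (J j0)) * mono (remove1 (J j0) s) t)"
   and "(\<Sum>j<length s. \<Sum>z\<in>bsupp (L a) (s ! j). br (L a) (s ! j) z * N (s[j := z]) t)
   = of_int (2 * j0 - p) * (\<psi> (I p) * (of_nat (count_list s (I j0)) * mono (remove1 (I j0) s) t)
        + \<psi> (J p) * (of_nat (count_list s (J j0)) * mono (remove1 (J j0) s) t))"
proof -
  have noLH: "\<not> isLH x" if "x \<in> set s" for x
    using l0 that by (auto simp: lhc_def filter_empty_conv)
  have q1: "j0 + a = p" "j0 - a = 2 * j0 - p" "a + j0 = p" using a by auto
  have eachH: "(\<Sum>z\<in>bsupp (H a) (s ! j). br (H a) (s ! j) z * N (s[j := z]) t)
     = (if s ! j = I j0 then \<psi> (I p) * mono (remove1 (I j0) s) t else 0)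
     + (if s ! j = J j0 then - \<psi> (J p) * mono (remove1 (J j0) s) t else 0)"
   and eachL: "(\<Sum>z\<in>bsupp (L a) (s ! j). br (L a) (s ! j) z * N (s[j := z]) t)
     = (if s ! j = I j0 then of_int (2 * j0 - p) * (\<psi> (I p) * mono (remove1 (I j0) s) t) else 0)
     + (if s ! j = J j0 then of_int (2 * j0 - p) * (\<psi> (J p) * mono (remove1 (J j0) s) t) else 0)"
    if j: "j < length s" for j
  proof -
    have sj: "s ! j \<in> set s" using j by simp
    have nB: "s ! j \<notin> B0" using s sj by (auto simp: nrm_def)
    have "(\<Sum>z\<in>bsupp (H a) (s ! j). br (H a) (s ! j) z * N (s[j := z]) t)
     = (if s ! j = I j0 then \<psi> (I p) * mono (remove1 (I j0) s) t else 0)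
     + (if s ! j = J j0 then - \<psi> (J p) * mono (remove1 (J j0) s) t else 0) \<and>
      (\<Sum>z\<in>bsupp (L a) (s ! j). br (L a) (s ! j) z * N (s[j := z]) t)
     = (if s ! j = I j0 then of_int (2 * j0 - p) * (\<psi> (I p) * mono (remove1 (I j0) s) t) else 0)
     + (if s ! j = J j0 then of_int (2 * j0 - p) * (\<psi> (J p) * mono (remove1 (J j0) s) t) else 0)"
    proof (cases "s ! j")
      case (I i)
      have ii: "i \<ge> j0" using j0[OF sj] I by simp
      have zB: "I (a + i) \<in> B0" using ii a mpos by (auto simp: inB0 p_def)
      have e: "N (s[j := I (a + i)]) t = \<psi> (I (a + i)) * mono (remove1 (I i) s) t"
        using NF_upd_top0[OF s j zB _ l0] I by simp
      have eH: "(\<Sum>z\<in>bsupp (H a) (s ! j). br (H a) (s ! j) z * N (s[j := z]) t) = \<psi> (I (a + i)) * mono (remove1 (I i) s) t"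
        unfolding sum_bsupp sum_Sup7 I using e by simp
      have eL: "(\<Sum>z\<in>bsupp (L a) (s ! j). br (L a) (s ! j) z * N (s[j := z]) t) = of_int (i - a) * (\<psi> (I (a + i)) * mono (remove1 (I i) s) t)"
        unfolding sum_bsupp sum_Sup7 I using e by simp
      show ?thesis
      proof (cases "i = j0")
        case True thus ?thesis using eH eL I by (simp add: add.commute q1)
      next
        case False
        hence "a + i \<ge> int m + int n" using ii a by (simp add: p_def)
        thus ?thesis using eH eL I False by (simp add: psiI)
      qed
    next
      case (J i)
      have ii: "i \<ge> j0" using j0[OF sj] J by simp
      have zB: "J (a + i) \<in> B0" using ii a mpos by (auto simp: inB0 p_def)
      have e: "N (s[j := J (a + i)]) t = \<psi> (J (a + i)) * mono (remove1 (J i) s) t"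
        using NF_upd_top0[OF s j zB _ l0] J by simp
      have eH: "(\<Sum>z\<in>bsupp (H a) (s ! j). br (H a) (s ! j) z * N (s[j := z]) t) = - (\<psi> (J (a + i)) * mono (remove1 (J i) s) t)"
        unfolding sum_bsupp sum_Sup7 J using e by simp
      have eL: "(\<Sum>z\<in>bsupp (L a) (s ! j). br (L a) (s ! j) z * N (s[j := z]) t) = of_int (i - a) * (\<psi> (J (a + i)) * mono (remove1 (J i) s) t)"
        unfolding sum_bsupp sum_Sup7 J using e by simp
      show ?thesis
      proof (cases "i = j0")
        case True thus ?thesis using eH eL J by (simp add: add.commute q1)
      next
        case False
        hence "a + i \<ge> int m + int n" using ii a by (simp add: p_def)
        thus ?thesis using eH eL J False by (simp add: psiJ)
      qed
    next
      case (L i) thus ?thesis using noLH[OF sj] by simp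
    next
      case (H i) thus ?thesis using noLH[OF sj] by simp
    qed (use nB in \<open>auto simp: inB0\<close>)
    thus "(\<Sum>z\<in>bsupp (H a) (s ! j). br (H a) (s ! j) z * N (s[j := z]) t)
     = (if s ! j = I j0 then \<psi> (I p) * mono (remove1 (I j0) s) t else 0)
     + (if s ! j = J j0 then - \<psi> (J p) * mono (remove1 (J j0) s) t else 0)"
     "(\<Sum>z\<in>bsupp (L a) (s ! j). br (L a) (s ! j) z * N (s[j := z]) t)
     = (if s ! j = I j0 then of_int (2 * j0 - p) * (\<psi> (I p) * mono (remove1 (I j0) s) t) else 0)
     + (if s ! j = J j0 then of_int (2 * j0 - p) * (\<psi> (J p) * mono (remove1 (J j0) s) t) else 0)" by auto
  qed
  have "(\<Sum>j<length s. \<Sum>z\<in>bsupp (H a) (s ! j). br (H a) (s ! j) z * N (s[j := z]) t)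
     = (\<Sum>j<length s. (if s ! j = I j0 then \<psi> (I p) * mono (remove1 (I j0) s) t else 0)
     + (if s ! j = J j0 then - \<psi> (J p) * mono (remove1 (J j0) s) t else 0))"
    by (rule sum.cong[OF refl]) (simp add: eachH)
  also have "\<dots> = of_nat (count_list s (I j0)) * (\<psi> (I p) * mono (remove1 (I j0) s) t)
      + of_nat (count_list s (J j0)) * (- \<psi> (J p) * mono (remove1 (J j0) s) t)"
    by (simp only: sum.distrib sum_count)
  finally show "(\<Sum>j<length s. \<Sum>z\<in>bsupp (H a) (s ! j). br (H a) (s ! j) z * N (s[j := z]) t)
   = \<psi> (I p) * (of_nat (count_list s (I j0)) * mono (remove1 (I j0) s) t)
        - \<psi> (J p) * (of_nat (count_list s (J j0)) * mono (remove1 (J j0) s) t)" by (simp add: algebra_simps)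
  have "(\<Sum>j<length s. \<Sum>z\<in>bsupp (L a) (s ! j). br (L a) (s ! j) z * N (s[j := z]) t)
     = (\<Sum>j<length s. (if s ! j = I j0 then of_int (2 * j0 - p) * (\<psi> (I p) * mono (remove1 (I j0) s) t) else 0)
     + (if s ! j = J j0 then of_int (2 * j0 - p) * (\<psi> (J p) * mono (remove1 (J j0) s) t) else 0))"
    by (rule sum.cong[OF refl]) (simp add: eachL)
  also have "\<dots> = of_nat (count_list s (I j0)) * (of_int (2 * j0 - p) * (\<psi> (I p) * mono (remove1 (I j0) s) t))
      + of_nat (count_list s (J j0)) * (of_int (2 * j0 - p) * (\<psi> (J p) * mono (remove1 (J j0) s) t))"
    by (simp only: sum.distrib sum_count)
  finally show "(\<Sum>j<length s. \<Sum>z\<in>bsupp (L a) (s ! j). br (L a) (s ! j) z * N (s[j := z]) t)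
   = of_int (2 * j0 - p) * (\<psi> (I p) * (of_nat (count_list s (I j0)) * mono (remove1 (I j0) s) t)
        + \<psi> (J p) * (of_nat (count_list s (J j0)) * mono (remove1 (J j0) s) t))" by (simp add: algebra_simps)
qed

end


context wsetup
begin

lemma p_odd: "2 * i \<noteq> p"
proof -
  have "odd (int m + int n)" if "2 * i = int m + int n - 1"
    using that by presburger
  moreover have "even (int m + int n)" using par by simp
  ultimately show ?thesis by (auto simp: p_def)
qed

lemma Dlow:
  assumes y: "\<not> isLH y" and lt: "lhc s \<le> lhc t"
  shows "(\<Sum>j<length s. \<Sum>z\<in>bsupp y (s ! j). br y (s ! j) z * N (s[j := z]) t) = 0"
proof (intro sum.neutral ballI)
  fix j z assume j: "j \<in> {..<length s}" and z: "z \<in> bsupp y (s ! j)"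
  have b: "br y (s ! j) z \<noteq> 0" using z by (simp add: bsupp_def)
  from br_lhc[OF b] y have "isLH (s ! j)" "\<not> isLH z" by auto
  hence "lhc (s[j := z]) < lhc t" using lhc_upd[of j s z] j lt by simp
  thus "br y (s ! j) z * N (s[j := z]) t = 0" using NF_supp[of B0 \<psi> "s[j := z]" t] by auto
qed

context
  fixes S assumes S: "subsp S" and WS: "Wker m n \<psi> \<subseteq> S" and ST: "S \<subseteq> Tfin"
    and cl: "\<And>b f. f \<in> S \<Longrightarrow> tmul (mono [b]) f \<in> S"
    and \<alpha>: "\<psi> (I p) \<noteq> 0" and \<beta>: "\<psi> (J p) \<noteq> 0"
begin

lemma WS0: "WkB B0 \<psi> \<subseteq> S" using WS Wker_eq by simp

lemma comb: "f1 \<in> S \<Longrightarrow> f2 \<in> S \<Longrightarrow> (\<lambda>w. c1 * f1 w + c2 * f2 w) \<in> S \<and>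
   NFT B0 \<psi> (\<lambda>w. c1 * f1 w + c2 * f2 w) = (\<lambda>t. c1 * NFT B0 \<psi> f1 t + c2 * NFT B0 \<psi> f2 t)"
proof -
  assume f1: "f1 \<in> S" and f2: "f2 \<in> S"
  have t1: "f1 \<in> Tfin" and t2: "f2 \<in> Tfin" using f1 f2 ST by auto
  show ?thesis
    using subsp_add[OF S subsp_scale[OF S f1] subsp_scale[OF S f2]]
      NFT_add[OF subsp_scale[OF Tfin_subsp t1] subsp_scale[OF Tfin_subsp t2]]
      NFT_scale[OF t1] NFT_scale[OF t2] by simp
qed

lemma base0:
  assumes f: "f \<in> S" and nz: "NFT B0 \<psi> f \<noteq> (\<lambda>t. 0)" and sup: "\<And>t. NFT B0 \<psi> f t \<noteq> 0 \<Longrightarrow> t = []"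
  shows "mono [] \<in> S"
proof -
  define P where "P = NFT B0 \<psi> f"
  have fT: "f \<in> Tfin" using f ST by auto
  have fP: "(\<lambda>t. f t - P t) \<in> S" using NFT_cong[OF fT] WS0 by (auto simp: P_def)
  have "(\<lambda>t. f t - (f t - P t)) \<in> S" by (rule subsp_diff[OF S f fP])
  hence PS: "P \<in> S" by simp
  have Pe: "P = (\<lambda>t. P [] * mono [] t)"
  proof (rule ext)
    fix t show "P t = P [] * mono [] t"
    proof (cases "t = []")
      case True thus ?thesis by (simp add: mono_def)
    next
      case False
      hence "P t = 0" using sup[of t] by (auto simp: P_def)
      thus ?thesis using False by (simp add: mono_def)
    qed
  qed
  have P0: "P [] \<noteq> 0"
  proof
    assume "P [] = 0"
    hence "P = (\<lambda>t. 0)" by (subst Pe) simp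
    thus False using nz by (simp add: P_def)
  qed
  have "(\<lambda>t. (1 / P []) * P t) \<in> S" by (rule subsp_scale[OF S PS])
  also have "(\<lambda>t. (1 / P []) * P t) = mono []" using P0 by (subst Pe) (auto simp: fun_eq_iff)
  finally show ?thesis .
qed

lemma stageA: "f \<in> S \<Longrightarrow> NFT B0 \<psi> f \<noteq> (\<lambda>t. 0) \<Longrightarrow> (\<And>t. NFT B0 \<psi> f t \<noteq> 0 \<Longrightarrow> lhc t = 0 \<and> length t \<le> e)
   \<Longrightarrow> mono [] \<in> S"
proof (induction e arbitrary: f)
  case 0
  show ?case by (rule base0[OF "0.prems"(1,2)]) (use "0.prems"(3) in auto)
next
  case (Suc e)
  note f = Suc.prems(1) and nz = Suc.prems(2) and sup = Suc.prems(3)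
  define P where "P = NFT B0 \<psi> f"
  define SP where "SP = {s. P s \<noteq> 0}"
  have fT: "f \<in> Tfin" using f ST by auto
  have PT: "P \<in> Tfin" using NFT_cong[OF fT] by (simp add: P_def)
  have finSP: "finite SP" using PT by (simp add: SP_def Tfin_def)
  have nSP: "nrm B0 s" if "s \<in> SP" for s using that NFT_nrm by (simp add: SP_def P_def)
  have lSP: "lhc s = 0" "length s \<le> Suc e" if "s \<in> SP" for s using that sup by (auto simp: SP_def P_def)
  show ?case
  proof (cases "\<forall>t. P t \<noteq> 0 \<longrightarrow> t = []")
    case True thus ?thesis using base0[OF f nz] by (simp add: P_def)
  next
    case False
    define X where "X = {idx x | x s. s \<in> SP \<and> x \<in> set s}"
    have finX: "finite X"
    proof -
      have "X = (\<Union>s\<in>SP. idx ` set s)" by (auto simp: X_def)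
      thus ?thesis using finSP by simp
    qed
    obtain s1 where s1: "s1 \<in> SP" "s1 \<noteq> []" using False by (auto simp: SP_def)
    have "hd s1 \<in> set s1" using s1(2) by simp
    hence "idx (hd s1) \<in> X" using s1(1) unfolding X_def by blast
    hence "X \<noteq> {}" by blast
    define j0 where "j0 = Min X"
    have "j0 \<in> X" using finX \<open>X \<noteq> {}\<close> by (simp add: j0_def)
    then obtain x0 s0 where s0: "s0 \<in> SP" "x0 \<in> set s0" "idx x0 = j0" by (auto simp: X_def)
    have j0le: "idx x \<ge> j0" if "s \<in> SP" "x \<in> set s" for s x
      using finX that by (auto simp: j0_def X_def intro!: Min_le)
    have x0nB: "x0 \<notin> B0" using nSP[OF s0(1)] s0(2) by (auto simp: nrm_def)
    have x0nLH: "\<not> isLH x0" using lSP(1)[OF s0(1)] s0(2) by (auto simp: lhc_def filter_empty_conv)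
    have x0IJ: "x0 = I j0 \<or> x0 = J j0" using x0nB x0nLH s0(3) by (cases x0) (auto simp: inB0)
    have j0n: "j0 < int n" using x0nB x0IJ by (auto simp: inB0)
    define a where "a = p - j0"
    have HB: "H a \<in> B0" "L a \<in> B0" using j0n by (auto simp: a_def p_def inB0)
    define fH where "fH = (\<lambda>w. tmul (mono [H a]) f w - \<psi> (H a) * f w)"
    define fL where "fL = (\<lambda>w. tmul (mono [L a]) f w - \<psi> (L a) * f w)"
    note OpH = Op[OF S WS0 ST cl f HB(1)]
    note OpL = Op[OF S WS0 ST cl f HB(2)]
    have fHS: "fH \<in> S" using conjunct1[OF OpH] by (simp add: fH_def)
    have fLS: "fL \<in> S" using conjunct1[OF OpL] by (simp add: fL_def)
    define c where "c = (of_int (2 * j0 - p) :: complex)"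
    have "2 * j0 - p \<noteq> 0" using p_odd[of j0] by simp
    hence c0: "c \<noteq> 0" unfolding c_def by (metis of_int_eq_0_iff)
    have DH: "(\<Sum>j<length s. \<Sum>z\<in>bsupp (H a) (s ! j). br (H a) (s ! j) z * N (s[j := z]) t)
       = \<psi> (I p) * (of_nat (count_list s (I j0)) * mono (remove1 (I j0) s) t)
        - \<psi> (J p) * (of_nat (count_list s (J j0)) * mono (remove1 (J j0) s) t)"
      and DL: "(\<Sum>j<length s. \<Sum>z\<in>bsupp (L a) (s ! j). br (L a) (s ! j) z * N (s[j := z]) t)
       = c * (\<psi> (I p) * (of_nat (count_list s (I j0)) * mono (remove1 (I j0) s) t)
        + \<psi> (J p) * (of_nat (count_list s (J j0)) * mono (remove1 (J j0) s) t))"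
      if "s \<in> SP" for s t
      using DHL[OF nSP[OF that] lSP(1)[OF that] j0le[OF that] a_def j0n] by (simp_all add: c_def)
    define dH where "dH s t = (\<Sum>j<length s. \<Sum>z\<in>bsupp (H a) (s ! j). br (H a) (s ! j) z * N (s[j := z]) t)" for s t
    define dL where "dL s t = (\<Sum>j<length s. \<Sum>z\<in>bsupp (L a) (s ! j). br (L a) (s ! j) z * N (s[j := z]) t)" for s t
    have fH': "NFT B0 \<psi> fH t = (\<Sum>s\<in>SP. P s * dH s t)" for t
      using conjunct2[OF OpH] by (simp add: fH_def dH_def SP_def P_def)
    have fL': "NFT B0 \<psi> fL t = (\<Sum>s\<in>SP. P s * dL s t)" for t
      using conjunct2[OF OpL] by (simp add: fL_def dL_def SP_def P_def)
    have DH': "dH s t = \<psi> (I p) * (of_nat (count_list s (I j0)) * mono (remove1 (I j0) s) t)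
        - \<psi> (J p) * (of_nat (count_list s (J j0)) * mono (remove1 (J j0) s) t)"
      and DL': "dL s t = c * (\<psi> (I p) * (of_nat (count_list s (I j0)) * mono (remove1 (I j0) s) t)
        + \<psi> (J p) * (of_nat (count_list s (J j0)) * mono (remove1 (J j0) s) t))"
      if "s \<in> SP" for s t using DH[OF that] DL[OF that] by (simp_all add: dH_def dL_def)
    have lin: "k1 * NFT B0 \<psi> fH t + k2 * NFT B0 \<psi> fL t = (\<Sum>s\<in>SP. P s * (k1 * dH s t + k2 * dL s t))" for k1 k2 t
      unfolding fH' fL' by (simp add: sum_distrib_left sum.distrib algebra_simps)
    obtain g where g: "g \<in> S" "NFT B0 \<psi> g = (\<lambda>t. \<Sum>s\<in>SP. P s * (of_nat (count_list s x0) * mono (remove1 x0 s) t))"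
    proof (cases "x0 = I j0")
      case True
      note cb = comb[OF fHS fLS, of "1 / (2 * \<psi> (I p))" "1 / (2 * \<psi> (I p) * c)"]
      have eq: "(\<lambda>t. 1 / (2 * \<psi> (I p)) * NFT B0 \<psi> fH t + 1 / (2 * \<psi> (I p) * c) * NFT B0 \<psi> fL t)
          = (\<lambda>t. \<Sum>s\<in>SP. P s * (of_nat (count_list s x0) * mono (remove1 x0 s) t))"
        unfolding lin True
        by (intro ext sum.cong refl) (simp add: DH' DL' field_simps \<alpha> c0)
      show ?thesis by (rule that[OF conjunct1[OF cb]]) (simp only: conjunct2[OF cb] eq)
    next
      case False
      hence x0J: "x0 = J j0" using x0IJ by simp
      note cb = comb[OF fHS fLS, of "- 1 / (2 * \<psi> (J p))" "1 / (2 * \<psi> (J p) * c)"]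
      have eq: "(\<lambda>t. - 1 / (2 * \<psi> (J p)) * NFT B0 \<psi> fH t + 1 / (2 * \<psi> (J p) * c) * NFT B0 \<psi> fL t)
          = (\<lambda>t. \<Sum>s\<in>SP. P s * (of_nat (count_list s x0) * mono (remove1 x0 s) t))"
        unfolding lin x0J
        by (intro ext sum.cong refl) (simp add: DH' DL' field_simps \<beta> c0)
      show ?thesis by (rule that[OF conjunct1[OF cb]]) (simp only: conjunct2[OF cb] eq)
    qed
    have srt: "\<And>s. s \<in> SP \<Longrightarrow> sorted s" using nSP by (simp add: nrm_def)
    define t0 where "t0 = remove1 x0 s0"
    have ins: "insort x0 t0 = s0" using insort_remove1[OF s0(2)] srt[OF s0(1)] by (simp add: t0_def)
    have "NFT B0 \<psi> g t0 = (\<Sum>s\<in>SP. P s * (of_nat (count_list s x0) * mono (remove1 x0 s) t0))"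
      by (simp add: g(2))
    also have "\<dots> = (if insort x0 t0 \<in> SP then P (insort x0 t0) * of_nat (count_list (insort x0 t0) x0) else 0)"
      by (rule sum_remove1[OF finSP srt])
    finally have "NFT B0 \<psi> g t0 = P s0 * of_nat (count_list s0 x0)" using s0(1) unfolding ins by simp
    moreover have "P s0 \<noteq> 0" "count_list s0 x0 \<noteq> 0" using s0 by (auto simp: SP_def count_list_0_iff)
    ultimately have "NFT B0 \<psi> g t0 \<noteq> 0" by simp
    hence nzg: "NFT B0 \<psi> g \<noteq> (\<lambda>t. 0)" by (auto simp: fun_eq_iff)
    have supg: "lhc t = 0 \<and> length t \<le> e" if "NFT B0 \<psi> g t \<noteq> 0" for t
    proof -
      have "\<exists>s\<in>SP. count_list s x0 \<noteq> 0 \<and> t = remove1 x0 s"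
      proof (rule ccontr)
        assume "\<not> ?thesis"
        hence "\<forall>s\<in>SP. P s * (of_nat (count_list s x0) * mono (remove1 x0 s) t) = 0" by (auto simp: mono_def)
        hence "NFT B0 \<psi> g t = 0" unfolding g(2) by (simp add: sum.neutral)
        thus False using that by simp
      qed
      then obtain s where s: "s \<in> SP" "count_list s x0 \<noteq> 0" "t = remove1 x0 s" by blast
      have "x0 \<in> set s" using s(2) by (simp add: count_list_0_iff)
      hence "length t = length s - 1" using s(3) by (simp add: length_remove1)
      moreover have "lhc t \<le> lhc s" using s(3) lhc_remove1 by simp
      ultimately show ?thesis using lSP[OF s(1)] by simp
    qed
    show ?thesis by (rule Suc.IH[OF g(1) nzg supg])
  qed
qed


lemma stageLH: "f \<in> S \<Longrightarrow> NFT B0 \<psi> f \<noteq> (\<lambda>t. 0) \<Longrightarrow> (\<And>t. NFT B0 \<psi> f t \<noteq> 0 \<Longrightarrow> lhc t \<le> d)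
   \<Longrightarrow> mono [] \<in> S"
proof (induction d arbitrary: f)
  case 0
  note f = "0.prems"(1) and nz = "0.prems"(2) and sup = "0.prems"(3)
  have fT: "f \<in> Tfin" using f ST by auto
  have PT: "NFT B0 \<psi> f \<in> Tfin" using NFT_cong[OF fT] by simp
  define SP where "SP = {s. NFT B0 \<psi> f s \<noteq> 0}"
  have finSP: "finite SP" using PT by (simp add: SP_def Tfin_def)
  show ?case
  proof (rule stageA[OF f nz])
    fix t assume t: "NFT B0 \<psi> f t \<noteq> 0"
    have "length t \<le> Max (length ` SP)" using t finSP by (auto simp: SP_def intro!: Max_ge)
    thus "lhc t = 0 \<and> length t \<le> Max (length ` SP)" using sup[OF t] by simp
  qed
next
  case (Suc d)
  note f = Suc.prems(1) and nz = Suc.prems(2) and sup = Suc.prems(3)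
  define P where "P = NFT B0 \<psi> f"
  define SP where "SP = {s. P s \<noteq> 0}"
  have fT: "f \<in> Tfin" using f ST by auto
  have PT: "P \<in> Tfin" using NFT_cong[OF fT] by (simp add: P_def)
  have finSP: "finite SP" using PT by (simp add: SP_def Tfin_def)
  have nSP: "nrm B0 s" if "s \<in> SP" for s using that NFT_nrm by (simp add: SP_def P_def)
  have lSP: "lhc s \<le> Suc d" if "s \<in> SP" for s using that sup by (auto simp: SP_def P_def)
  show ?case
  proof (cases "\<forall>s\<in>SP. lhc s \<le> d")
    case True
    show ?thesis by (rule Suc.IH[OF f nz]) (use True in \<open>auto simp: SP_def P_def\<close>)
  next
    case False
    then obtain s1 where s1: "s1 \<in> SP" "lhc s1 = Suc d" using lSP by force
    define X where "X = {idx x | x s. s \<in> SP \<and> lhc s = Suc d \<and> x \<in> set s \<and> isLH x}"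
    have finX: "finite X"
    proof -
      have "X \<subseteq> (\<Union>s\<in>SP. idx ` set s)" by (auto simp: X_def)
      thus ?thesis using finSP by (auto intro: finite_subset)
    qed
    obtain x1 where x1: "x1 \<in> set s1" "isLH x1"
      using s1(2) by (auto simp: lhc_def filter_empty_conv) (metis length_0_conv nat.distinct(1) filter_empty_conv)
    have "idx x1 \<in> X" using s1 x1 unfolding X_def by blast
    hence "X \<noteq> {}" by blast
    define i0 where "i0 = Min X"
    have "i0 \<in> X" using finX \<open>X \<noteq> {}\<close> by (simp add: i0_def)
    then obtain x0 s0 where s0: "s0 \<in> SP" "lhc s0 = Suc d" "x0 \<in> set s0" "isLH x0" "idx x0 = i0"
      by (auto simp: X_def)
    have i0le: "idx x \<ge> i0" if "s \<in> SP" "lhc s = Suc d" "x \<in> set s" "isLH x" for s x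
      using finX that by (auto simp: i0_def X_def intro!: Min_le)
    have x0nB: "x0 \<notin> B0" using nSP[OF s0(1)] s0(3) by (auto simp: nrm_def)
    have x0LH: "x0 = L i0 \<or> x0 = H i0" using s0(4,5) by (cases x0) auto
    have i0m: "i0 < int m" using x0nB x0LH by (auto simp: inB0)
    define k where "k = p - i0"
    have IB: "I k \<in> B0" "J k \<in> B0" using i0m by (auto simp: k_def p_def inB0)
    define fI where "fI = (\<lambda>w. tmul (mono [I k]) f w - \<psi> (I k) * f w)"
    define fJ where "fJ = (\<lambda>w. tmul (mono [J k]) f w - \<psi> (J k) * f w)"
    note OpI = Op[OF S WS0 ST cl f IB(1)]
    note OpJ = Op[OF S WS0 ST cl f IB(2)]
    have fIS: "fI \<in> S" using conjunct1[OF OpI] by (simp add: fI_def)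
    have fJS: "fJ \<in> S" using conjunct1[OF OpJ] by (simp add: fJ_def)
    define dI where "dI s t = (\<Sum>j<length s. \<Sum>z\<in>bsupp (I k) (s ! j). br (I k) (s ! j) z * N (s[j := z]) t)" for s t
    define dJ where "dJ s t = (\<Sum>j<length s. \<Sum>z\<in>bsupp (J k) (s ! j). br (J k) (s ! j) z * N (s[j := z]) t)" for s t
    have fI': "NFT B0 \<psi> fI t = (\<Sum>s\<in>SP. P s * dI s t)" for t
      using conjunct2[OF OpI] by (simp add: fI_def dI_def SP_def P_def)
    have fJ': "NFT B0 \<psi> fJ t = (\<Sum>s\<in>SP. P s * dJ s t)" for t
      using conjunct2[OF OpJ] by (simp add: fJ_def dJ_def SP_def P_def)
    define c where "c = (of_int (2 * i0 - p) :: complex)"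
    have "2 * i0 - p \<noteq> 0" using p_odd[of i0] by simp
    hence c0: "c \<noteq> 0" unfolding c_def by (metis of_int_eq_0_iff)
    have dlow: "dI s t = 0" "dJ s t = 0" if "lhc s \<le> lhc t" for s t
      using Dlow[of "I k" s t] Dlow[of "J k" s t] that by (simp_all add: dI_def dJ_def)
    have dtop: "dI s t = \<psi> (I p) * (c * (of_nat (count_list s (L i0)) * mono (remove1 (L i0) s) t)
        - of_nat (count_list s (H i0)) * mono (remove1 (H i0) s) t)"
      "dJ s t = \<psi> (J p) * (c * (of_nat (count_list s (L i0)) * mono (remove1 (L i0) s) t)
        + of_nat (count_list s (H i0)) * mono (remove1 (H i0) s) t)"
      if "s \<in> SP" "lhc s = Suc d" "lhc t = d" for s t
    proof -
      have i0s: "\<And>x. x \<in> set s \<Longrightarrow> isLH x \<Longrightarrow> idx x \<ge> i0" using i0le that(1,2) by blast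
      have lt: "lhc t + 1 = lhc s" using that by simp
      show "dI s t = \<psi> (I p) * (c * (of_nat (count_list s (L i0)) * mono (remove1 (L i0) s) t)
        - of_nat (count_list s (H i0)) * mono (remove1 (H i0) s) t)"
        using DI[OF nSP[OF that(1)] i0s lt k_def] by (simp add: dI_def c_def)
      show "dJ s t = \<psi> (J p) * (c * (of_nat (count_list s (L i0)) * mono (remove1 (L i0) s) t)
        + of_nat (count_list s (H i0)) * mono (remove1 (H i0) s) t)"
        using DJ[OF nSP[OF that(1)] i0s lt k_def] by (simp add: dJ_def c_def)
    qed
    have lin: "k1 * NFT B0 \<psi> fI t + k2 * NFT B0 \<psi> fJ t = (\<Sum>s\<in>SP. P s * (k1 * dI s t + k2 * dJ s t))" for k1 k2 t
      unfolding fI' fJ' by (simp add: sum_distrib_left sum.distrib algebra_simps)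
    obtain g where gS: "g \<in> S"
      and gform: "\<And>t. lhc t = d \<Longrightarrow> NFT B0 \<psi> g t = (\<Sum>s\<in>SP. (if lhc s = Suc d then P s else 0) *
            (of_nat (count_list s x0) * mono (remove1 x0 s) t))"
      and glow: "\<And>t. Suc d \<le> lhc t \<Longrightarrow> NFT B0 \<psi> g t = 0"
    proof (cases "x0 = L i0")
      case True
      note cb = comb[OF fIS fJS, of "1 / (2 * \<psi> (I p) * c)" "1 / (2 * \<psi> (J p) * c)"]
      show ?thesis
      proof (rule that[OF conjunct1[OF cb]])
        fix t assume t: "lhc t = d"
        show "NFT B0 \<psi> (\<lambda>w. 1 / (2 * \<psi> (I p) * c) * fI w + 1 / (2 * \<psi> (J p) * c) * fJ w) t =
          (\<Sum>s\<in>SP. (if lhc s = Suc d then P s else 0) * (of_nat (count_list s x0) * mono (remove1 x0 s) t))"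
          unfolding conjunct2[OF cb] lin True
        proof (intro sum.cong refl)
          fix s assume s: "s \<in> SP"
          show "P s * (1 / (2 * \<psi> (I p) * c) * dI s t + 1 / (2 * \<psi> (J p) * c) * dJ s t) =
            (if lhc s = Suc d then P s else 0) * (of_nat (count_list s (L i0)) * mono (remove1 (L i0) s) t)"
          proof (cases "lhc s = Suc d")
            case True thus ?thesis unfolding dtop[OF s True t] using \<alpha> \<beta> c0 by (simp add: field_simps)
          next
            case False
            hence "lhc s \<le> lhc t" using lSP[OF s] t by simp
            thus ?thesis using dlow False by simp
          qed
        qed
      next
        fix t assume t: "Suc d \<le> lhc t"
        have "lhc s \<le> lhc t" if "s \<in> SP" for s using lSP[OF that] t by simp
        thus "NFT B0 \<psi> (\<lambda>w. 1 / (2 * \<psi> (I p) * c) * fI w + 1 / (2 * \<psi> (J p) * c) * fJ w) t = 0"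
          unfolding conjunct2[OF cb] lin using dlow by (simp add: sum.neutral)
      qed
    next
      case False
      hence x0H: "x0 = H i0" using x0LH by simp
      note cb = comb[OF fIS fJS, of "- 1 / (2 * \<psi> (I p))" "1 / (2 * \<psi> (J p))"]
      show ?thesis
      proof (rule that[OF conjunct1[OF cb]])
        fix t assume t: "lhc t = d"
        show "NFT B0 \<psi> (\<lambda>w. - 1 / (2 * \<psi> (I p)) * fI w + 1 / (2 * \<psi> (J p)) * fJ w) t =
          (\<Sum>s\<in>SP. (if lhc s = Suc d then P s else 0) * (of_nat (count_list s x0) * mono (remove1 x0 s) t))"
          unfolding conjunct2[OF cb] lin x0H
        proof (intro sum.cong refl)
          fix s assume s: "s \<in> SP"
          show "P s * (- 1 / (2 * \<psi> (I p)) * dI s t + 1 / (2 * \<psi> (J p)) * dJ s t) =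
            (if lhc s = Suc d then P s else 0) * (of_nat (count_list s (H i0)) * mono (remove1 (H i0) s) t)"
          proof (cases "lhc s = Suc d")
            case True thus ?thesis unfolding dtop[OF s True t] using \<alpha> \<beta> c0 by (simp add: field_simps)
          next
            case False
            hence "lhc s \<le> lhc t" using lSP[OF s] t by simp
            thus ?thesis using dlow False by simp
          qed
        qed
      next
        fix t assume t: "Suc d \<le> lhc t"
        have "lhc s \<le> lhc t" if "s \<in> SP" for s using lSP[OF that] t by simp
        thus "NFT B0 \<psi> (\<lambda>w. - 1 / (2 * \<psi> (I p)) * fI w + 1 / (2 * \<psi> (J p)) * fJ w) t = 0"
          unfolding conjunct2[OF cb] lin using dlow by (simp add: sum.neutral)
      qed
    qed
    have srt: "\<And>s. s \<in> SP \<Longrightarrow> sorted s" using nSP by (simp add: nrm_def)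
    define t0 where "t0 = remove1 x0 s0"
    have ins: "insort x0 t0 = s0" using insort_remove1[OF s0(3)] srt[OF s0(1)] by (simp add: t0_def)
    have lt0: "lhc t0 = d"
    proof -
      have "lhc s0 = lhc (remove1 x0 s0) + 1" using s0(3,4) by (induction s0) auto
      thus ?thesis using s0(2) by (simp add: t0_def)
    qed
    have "NFT B0 \<psi> g t0 = (\<Sum>s\<in>SP. (if lhc s = Suc d then P s else 0) * (of_nat (count_list s x0) * mono (remove1 x0 s) t0))"
      by (rule gform[OF lt0])
    also have "\<dots> = (if insort x0 t0 \<in> SP then (if lhc (insort x0 t0) = Suc d then P (insort x0 t0) else 0)
        * of_nat (count_list (insort x0 t0) x0) else 0)"
      by (rule sum_remove1[OF finSP srt])
    finally have "NFT B0 \<psi> g t0 = P s0 * of_nat (count_list s0 x0)" using s0(1,2) unfolding ins by simp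
    moreover have "P s0 \<noteq> 0" "count_list s0 x0 \<noteq> 0" using s0 by (auto simp: SP_def count_list_0_iff)
    ultimately have "NFT B0 \<psi> g t0 \<noteq> 0" by simp
    hence nzg: "NFT B0 \<psi> g \<noteq> (\<lambda>t. 0)" by (auto simp: fun_eq_iff)
    have supg: "lhc t \<le> d" if "NFT B0 \<psi> g t \<noteq> 0" for t
      using glow[of t] that by (cases "Suc d \<le> lhc t") auto
    show ?thesis by (rule Suc.IH[OF gS nzg supg])
  qed
qed

end

end


context wsetup
begin

lemma all_mono_in:
  assumes S: "subsp S" and cl: "\<And>b f. f \<in> S \<Longrightarrow> tmul (mono [b]) f \<in> S" and one: "mono [] \<in> S"
  shows "mono u \<in> S"
proof (induction u)
  case Nil thus ?case using one .
next
  case (Cons b u)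
  have e: "tmul (mono [b]) (mono u) = mono (b # u)" using tmul_mono_mono[of "[b]" u] by simp
  show ?case using cl[OF Cons.IH, of b] unfolding e .
qed

lemma if_dir: assumes \<alpha>: "\<psi> (I p) \<noteq> 0" and \<beta>: "\<psi> (J p) \<noteq> 0"
  shows "whittaker_module_irreducible m n \<psi>"
  unfolding whittaker_module_irreducible_def
proof (intro conjI allI impI)
  show "Wker m n \<psi> \<noteq> Tfin" using one_notin mono_Tfin[of "[]"] Wker_eq by auto
next
  fix S assume "subsp S \<and> Wker m n \<psi> \<subseteq> S \<and> S \<subseteq> Tfin \<and> (\<forall>b. \<forall>f\<in>S. tmul (mono [b]) f \<in> S)"
  hence S: "subsp S" and WS: "Wker m n \<psi> \<subseteq> S" and ST: "S \<subseteq> Tfin"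
    and cl: "\<And>b f. f \<in> S \<Longrightarrow> tmul (mono [b]) f \<in> S" by auto
  show "S = Wker m n \<psi> \<or> S = Tfin"
  proof (cases "S = Wker m n \<psi>")
    case True thus ?thesis by simp
  next
    case False
    then obtain f where f: "f \<in> S" "f \<notin> Wker m n \<psi>" using WS by auto
    have fT: "f \<in> Tfin" using f ST by auto
    have nz: "NFT B0 \<psi> f \<noteq> (\<lambda>t. 0)"
    proof
      assume "NFT B0 \<psi> f = (\<lambda>t. 0)"
      hence "f \<in> WkB B0 \<psi>" using NFT_cong[OF fT, of B0 \<psi>] by simp
      thus False using f(2) Wker_eq by simp
    qed
    define SP where "SP = {t. NFT B0 \<psi> f t \<noteq> 0}"
    have finSP: "finite SP" using NFT_cong[OF fT] by (simp add: SP_def Tfin_def)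
    have one: "mono [] \<in> S"
    proof (rule stageLH[OF S WS ST cl \<alpha> \<beta> f(1) nz])
      fix t assume "NFT B0 \<psi> f t \<noteq> 0"
      thus "lhc t \<le> Max (lhc ` SP)" using finSP by (auto simp: SP_def intro!: Max_ge)
    qed
    have "Tfin \<subseteq> S"
    proof
      fix g assume g: "g \<in> Tfin"
      have "(\<lambda>w. \<Sum>s\<in>{s. g s \<noteq> 0}. g s * mono s w) \<in> S"
        using g all_mono_in[OF S cl one] by (intro subsp_sum_scale[OF S]) (auto simp: Tfin_def)
      thus "g \<in> S" using Tfin_expand[OF g] by simp
    qed
    thus ?thesis using ST by auto
  qed
qed

end


context wsetup
begin

lemma nfl_extI:
  assumes z: "\<psi> (I p) = 0"
  shows "nfl (insert (I (int n - 1)) B0) (\<psi>(I (int n - 1) := c))"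
proof
  have ge: "\<psi> (I k) = 0" if "k \<ge> p" for k
    using z psiI[of k] that by (cases "k = p") (auto simp: p_def)
  fix x y w
  show "x \<in> insert (I (int n - 1)) B0 \<Longrightarrow> y \<in> insert (I (int n - 1)) B0 \<Longrightarrow> br x y w \<noteq> 0
      \<Longrightarrow> w \<in> insert (I (int n - 1)) B0"
    using mpos unfolding insert_iff inB0
    by (cases x; cases y; cases w) (auto split: if_splits)
  have side: "(\<Sum>z\<in>bsupp (I (int n - 1)) y. br (I (int n - 1)) y z * (\<psi>(I (int n - 1) := c)) z) = 0"
    if y: "y \<in> B0" for y
  proof (cases y)
    case (L a)
    have a: "a \<ge> int m" using y L by (simp add: inB0)
    have "\<psi> (I (a + (int n - 1))) = 0" using ge a by (simp add: p_def)
    thus ?thesis unfolding sum_bsupp sum_Sup7 L using a mpos by (simp add: add.commute)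
  next
    case (H a)
    have a: "a \<ge> int m" using y H by (simp add: inB0)
    have "\<psi> (I (a + (int n - 1))) = 0" using ge a by (simp add: p_def)
    thus ?thesis unfolding sum_bsupp sum_Sup7 H using a mpos by (simp add: add.commute)
  qed (simp_all add: bsupp_def)
  assume x: "x \<in> insert (I (int n - 1)) B0" and y: "y \<in> insert (I (int n - 1)) B0"
  have nB: "I (int n - 1) \<notin> B0" by (simp add: inB0)
  show "(\<Sum>z\<in>bsupp x y. br x y z * (\<psi>(I (int n - 1) := c)) z) = 0"
  proof (cases "x \<in> B0 \<and> y \<in> B0")
    case True
    have "(\<Sum>z\<in>bsupp x y. br x y z * (\<psi>(I (int n - 1) := c)) z) = (\<Sum>z\<in>bsupp x y. br x y z * \<psi> z)"
    proof (rule sum.cong[OF refl])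
      fix z assume "z \<in> bsupp x y"
      hence "z \<in> B0" using clos0[of x y z] True by (simp add: bsupp_def)
      thus "br x y z * (\<psi>(I (int n - 1) := c)) z = br x y z * \<psi> z" using nB by auto
    qed
    thus ?thesis using chr0 True by simp
  next
    case False
    then consider "x = I (int n - 1)" "y = I (int n - 1)" | "x = I (int n - 1)" "y \<in> B0" | "y = I (int n - 1)" "x \<in> B0"
      using x y by auto
    thus ?thesis
    proof cases
      case 1 thus ?thesis by (simp add: bsupp_def br_self)
    next
      case 2 thus ?thesis using side by simp
    next
      case 3 thus ?thesis using side[OF 3(2)] sum_bsupp_anti[of x "I (int n - 1)" "\<psi>(I (int n - 1) := c)"] by simp
    qed
  qed
qed

lemma nfl_extJ:
  assumes z: "\<psi> (J p) = 0"
  shows "nfl (insert (J (int n - 1)) B0) (\<psi>(J (int n - 1) := c))"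
proof
  have ge: "\<psi> (J k) = 0" if "k \<ge> p" for k
    using z psiJ[of k] that by (cases "k = p") (auto simp: p_def)
  fix x y w
  show "x \<in> insert (J (int n - 1)) B0 \<Longrightarrow> y \<in> insert (J (int n - 1)) B0 \<Longrightarrow> br x y w \<noteq> 0
      \<Longrightarrow> w \<in> insert (J (int n - 1)) B0"
    using mpos unfolding insert_iff inB0
    by (cases x; cases y; cases w) (auto split: if_splits)
  have side: "(\<Sum>z\<in>bsupp (J (int n - 1)) y. br (J (int n - 1)) y z * (\<psi>(J (int n - 1) := c)) z) = 0"
    if y: "y \<in> B0" for y
  proof (cases y)
    case (L a)
    have a: "a \<ge> int m" using y L by (simp add: inB0)
    have "\<psi> (J (a + (int n - 1))) = 0" using ge a by (simp add: p_def)
    thus ?thesis unfolding sum_bsupp sum_Sup7 L using a mpos by (simp add: add.commute)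
  next
    case (H a)
    have a: "a \<ge> int m" using y H by (simp add: inB0)
    have "\<psi> (J (a + (int n - 1))) = 0" using ge a by (simp add: p_def)
    thus ?thesis unfolding sum_bsupp sum_Sup7 H using a mpos by (simp add: add.commute)
  qed (simp_all add: bsupp_def)
  assume x: "x \<in> insert (J (int n - 1)) B0" and y: "y \<in> insert (J (int n - 1)) B0"
  have nB: "J (int n - 1) \<notin> B0" by (simp add: inB0)
  show "(\<Sum>z\<in>bsupp x y. br x y z * (\<psi>(J (int n - 1) := c)) z) = 0"
  proof (cases "x \<in> B0 \<and> y \<in> B0")
    case True
    have "(\<Sum>z\<in>bsupp x y. br x y z * (\<psi>(J (int n - 1) := c)) z) = (\<Sum>z\<in>bsupp x y. br x y z * \<psi> z)"
    proof (rule sum.cong[OF refl])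
      fix z assume "z \<in> bsupp x y"
      hence "z \<in> B0" using clos0[of x y z] True by (simp add: bsupp_def)
      thus "br x y z * (\<psi>(J (int n - 1) := c)) z = br x y z * \<psi> z" using nB by auto
    qed
    thus ?thesis using chr0 True by simp
  next
    case False
    then consider "x = J (int n - 1)" "y = J (int n - 1)" | "x = J (int n - 1)" "y \<in> B0" | "y = J (int n - 1)" "x \<in> B0"
      using x y by auto
    thus ?thesis
    proof cases
      case 1 thus ?thesis by (simp add: bsupp_def br_self)
    next
      case 2 thus ?thesis using side by simp
    next
      case 3 thus ?thesis using side[OF 3(2)] sum_bsupp_anti[of x "J (int n - 1)" "\<psi>(J (int n - 1) := c)"] by simp
    qed
  qed
qed

lemma gens_mono_ext: "x0 \<notin> B0 \<Longrightarrow> gens B0 \<psi> \<subseteq> gens (insert x0 B0) (\<psi>(x0 := c))"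
  unfolding gens_def by auto

lemma onlyif_gen:
  assumes n0: "nfl (insert x0 B0) (\<psi>(x0 := 0))" and n1: "nfl (insert x0 B0) (\<psi>(x0 := 1))"
    and x0: "x0 \<notin> B0" and irr: "whittaker_module_irreducible m n \<psi>"
  shows False
proof -
  define S where "S = WkB (insert x0 B0) (\<psi>(x0 := 0))"
  define S1 where "S1 = WkB (insert x0 B0) (\<psi>(x0 := 1))"
  have WS: "Wker m n \<psi> \<subseteq> S" unfolding S_def Wker_eq WkB_def by (rule lspan_mono[OF gens_mono_ext[OF x0]])
  have WS1: "Wker m n \<psi> \<subseteq> S1" unfolding S1_def Wker_eq WkB_def by (rule lspan_mono[OF gens_mono_ext[OF x0]])
  have "S = Wker m n \<psi> \<or> S = Tfin"
    using irr unfolding whittaker_module_irreducible_def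
    using WkB_subsp WS WkB_Tfin WkB_left unfolding S_def by blast
  moreover have "S \<noteq> Tfin" using nfl.one_notin[OF n0] mono_Tfin[of "[]"] by (auto simp: S_def)
  moreover have "S \<noteq> Wker m n \<psi>"
  proof
    assume eq: "S = Wker m n \<psi>"
    have "(\<lambda>w. mono ([] @ [x0]) w - (\<psi>(x0 := 0)) x0 * mono [] w) \<in> S"
      unfolding S_def by (rule gen_chr_in) simp
    hence m1: "mono [x0] \<in> S1" using eq WS1 by auto
    have m2: "(\<lambda>w. mono ([] @ [x0]) w - (\<psi>(x0 := 1)) x0 * mono [] w) \<in> S1"
      unfolding S1_def by (rule gen_chr_in) simp
    have "(\<lambda>w. mono [x0] w - (mono [x0] w - mono [] w)) \<in> S1"
      using subsp_diff[OF WkB_subsp m1[unfolded S1_def] m2[unfolded S1_def]] by (simp add: S1_def)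
    hence "mono [] \<in> S1" by simp
    thus False using nfl.one_notin[OF n1] by (simp add: S1_def)
  qed
  ultimately show False by simp
qed

lemma onlyif: "whittaker_module_irreducible m n \<psi> \<Longrightarrow> \<psi> (I p) \<noteq> 0 \<and> \<psi> (J p) \<noteq> 0"
proof -
  assume irr: "whittaker_module_irreducible m n \<psi>"
  have "\<psi> (I p) \<noteq> 0"
  proof
    assume z: "\<psi> (I p) = 0"
    show False by (rule onlyif_gen[OF nfl_extI[OF z] nfl_extI[OF z] _ irr]) (simp add: inB0)
  qed
  moreover have "\<psi> (J p) \<noteq> 0"
  proof
    assume z: "\<psi> (J p) = 0"
    show False by (rule onlyif_gen[OF nfl_extJ[OF z] nfl_extJ[OF z] _ irr]) (simp add: inB0)
  qed
  ultimately show ?thesis by simp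
qed

end

theorem theorem3p9:
  fixes m n :: nat and \<psi> :: "gb \<Rightarrow> complex"
  assumes "m > 0" and "even (m + n)" and "whittaker_fun m n \<psi>"
  shows "whittaker_module_irreducible m n \<psi> \<longleftrightarrow>
           \<psi> (I (int m + int n - 1)) * \<psi> (J (int m + int n - 1)) \<noteq> 0"
proof -
  interpret wsetup m n \<psi> using assms by unfold_locales
  show ?thesis using if_dir onlyif by (auto simp: p_def)
qed


end
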